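(* Let $\mathcal R$ be a Riemann surface, $f:\mathcal R\to\mathrm{Nil}_3$ a conformal minimal immersion which is nowhere vertical with upward normal, and $g:\mathcal R\to\mathbb D=\{|w|<1\}\cong\mathbb H^2$ its normal Gauss map. Let $\gamma\in\mathrm{Aut}(\mathcal R)$. (a) If $f\circ\gamma=\rho\circ f$ for some $\rho=(p,e^{i\theta})\in\mathrm{Iso}_\circ(\mathrm{Nil}_3)$, then $g\circ\gamma=e^{i\theta}g$, i.e. $g$ is symmetric with respect to $(\gamma,R)$ where $R$ is the rotation of $\mathbb H^2$ about $0$ by the angle $\theta$ of the fiber rotation of $\rho$. (b) Conversely, if $g\circ\gamma=e^{i\theta}g$ for some $\theta\in\mathbb R$ (i.e. $g\circ\gamma=R\circ g$ with $R$ a rotation about $0$), then there exists $\rho\in\mathrm{Iso}_\circ(\mathrm{Nil}_3)$ whose fiber rotation has angle $\theta$ such that $f\circ\gamma=\rho\circ f$.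
   Context: $\mathrm{Nil}_3$ denotes $\mathbb R^3$ with the group law $(a_1,a_2,a_3)\cdot(x_1,x_2,x_3)=(a_1+x_1,a_2+x_2,a_3+x_3+\tfrac12(a_1x_2-a_2x_1))$ and the left-invariant Riemannian metric $dx_1^2+dx_2^2+(dx_3+\tfrac12(x_2dx_1-x_1dx_2))^2$; its center is $\{(0,0,c):c\in\mathbb R\}$. The identity component of its isometry group is $\mathrm{Iso}_\circ(\mathrm{Nil}_3)\cong\mathrm{Nil}_3\rtimes\mathrm U_1$, where $(a,e^{i\theta})$ acts by $(a,e^{i\theta}).(x_1,x_2,x_3)=a\cdot(\cos\theta\, x_1-\sin\theta\, x_2,\ \sin\theta\, x_1+\cos\theta\, x_2,\ x_3)$, and the group law is composition of these maps. The number $\theta$ (mod $2\pi$) is the angle of the fiber rotation of $(a,e^{i\theta})$; elements with $\theta=0$ are identified with $\mathrm{Nil}_3$ (left translations). Normal Gauss map: let $e_1,e_2,e_3$ be the standard basis of the Lie algebra $\mathfrak{nil}_3\cong\mathbb R^3$ (with $[e_1,e_2]=e_3$). For a conformal immersion $f$ and local conformal coordinate $z$, write $f^{-1}\partial_z f=\phi_1e_1+\phi_2e_2+\phi_3e_3$ (left translation to the identity). There are functions $\psi_1,\psi_2$ (unique up to a common sign) with $\phi_1=\overline{\psi_2}^2-\psi_1^2$, $\phi_2=i(\overline{\psi_2}^2+\psi_1^2)$, $\phi_3=2\psi_1\overline{\psi_2}$. The left-translated unit normal is $f^{-1}N=\big(2\,\mathrm{Re}(\psi_1\psi_2)e_1+2\,\mathrm{Im}(\psi_1\psi_2)e_2+(|\psi_1|^2-|\psi_2|^2)e_3\big)/(|\psi_1|^2+|\psi_2|^2)$,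 and the normal Gauss map is $g=\psi_2/\overline{\psi_1}$ (stereographic projection of $f^{-1}N$ from the south pole). $f$ is nowhere vertical if $|\psi_1|\ne|\psi_2|$ everywhere (the vector field $\partial_{x_3}$ is nowhere tangent), and has upward normal if $|\psi_1|>|\psi_2|$, so that $g$ takes values in the unit disk, viewed as the Poincaré model of $\mathbb H^2=\mathrm{SU}_{1,1}/\mathrm U_1$. *)

theory Defs
  imports "HOL-Analysis.Analysis"
begin

definition riemann_surface :: "'a topology \<Rightarrow> ('a set \<times> ('a \<Rightarrow> complex)) set \<Rightarrow> bool" where
  "riemann_surface X A \<longleftrightarrow>
     Hausdorff_space X \<and> connected_space X \<and> topspace X \<noteq> {} \<and>
     (\<Union>(fst ` A) = topspace X) \<and>
     (\<forall>(U,\<phi>)\<in>A. openin X U \<and> open (\<phi> ` U) \<and>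
        homeomorphic_map (subtopology X U) (top_of_set (\<phi> ` U)) \<phi>) \<and>
     (\<forall>(U,\<phi>)\<in>A. \<forall>(V,\<psi>)\<in>A. (\<psi> \<circ> inv_into U \<phi>) holomorphic_on (\<phi> ` (U \<inter> V)))"

definition riemann_holomorphic :: "'a topology \<Rightarrow> ('a set \<times> ('a \<Rightarrow> complex)) set \<Rightarrow> ('a \<Rightarrow> 'a) \<Rightarrow> bool" where
  "riemann_holomorphic X A h \<longleftrightarrow>
     continuous_map X X h \<and>
     (\<forall>(U,\<phi>)\<in>A. \<forall>(V,\<psi>)\<in>A.
        (\<psi> \<circ> h \<circ> inv_into U \<phi>) holomorphic_on (\<phi> ` (U \<inter> {p \<in> topspace X. h p \<in> V})))"

definition riemann_aut :: "'a topology \<Rightarrow> ('a set \<times> ('a \<Rightarrow> complex)) set \<Rightarrow> ('a \<Rightarrow> 'a) \<Rightarrow> bool" where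
  "riemann_aut X A h \<longleftrightarrow>
     homeomorphic_map X X h \<and> riemann_holomorphic X A h \<and>
     riemann_holomorphic X A (inv_into (topspace X) h)"

definition nil_mult :: "real^3 \<Rightarrow> real^3 \<Rightarrow> real^3" where
  "nil_mult a x = vector [a$1 + x$1, a$2 + x$2, a$3 + x$3 + (a$1 * x$2 - a$2 * x$1) / 2]"

definition nil_inv :: "real^3 \<Rightarrow> real^3" where
  "nil_inv a = - a"

definition nil_rot :: "real \<Rightarrow> real^3 \<Rightarrow> real^3" where
  "nil_rot \<theta> x = vector [cos \<theta> * x$1 - sin \<theta> * x$2, sin \<theta> * x$1 + cos \<theta> * x$2, x$3]"

definition nil_iso :: "real^3 \<Rightarrow> real \<Rightarrow> real^3 \<Rightarrow> real^3" where
  "nil_iso p \<theta> x = nil_mult p (nil_rot \<theta> x)"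

definition nil_inner :: "real^3 \<Rightarrow> real^3 \<Rightarrow> real^3 \<Rightarrow> real" where
  "nil_inner x v w =
     v$1 * w$1 + v$2 * w$2 +
     (v$3 + (x$2 * v$1 - x$1 * v$2) / 2) * (w$3 + (x$2 * w$1 - x$1 * w$2) / 2)"

definition nil_metric_matrix :: "real^3 \<Rightarrow> real^3^3" where
  "nil_metric_matrix x = (\<chi> i j. nil_inner x (axis i 1) (axis j 1))"

definition pd3 :: "(real^3 \<Rightarrow> real) \<Rightarrow> 3 \<Rightarrow> real^3 \<Rightarrow> real" where
  "pd3 h i x = frechet_derivative h (at x) (axis i 1)"

definition nil_christoffel :: "3 \<Rightarrow> 3 \<Rightarrow> 3 \<Rightarrow> real^3 \<Rightarrow> real" where
  "nil_christoffel k i j x =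
     (\<Sum>l\<in>UNIV. (matrix_inv (nil_metric_matrix x)) $ k $ l *
        (pd3 (\<lambda>y. nil_metric_matrix y $ j $ l) i x + pd3 (\<lambda>y. nil_metric_matrix y $ i $ l) j x
         - pd3 (\<lambda>y. nil_metric_matrix y $ i $ j) l x)) / 2"

definition dx :: "(complex \<Rightarrow> 'b::real_normed_vector) \<Rightarrow> complex \<Rightarrow> 'b" where
  "dx F z = frechet_derivative F (at z) 1"

definition dy :: "(complex \<Rightarrow> 'b::real_normed_vector) \<Rightarrow> complex \<Rightarrow> 'b" where
  "dy F z = frechet_derivative F (at z) \<i>"

fun Ck_on :: "nat \<Rightarrow> complex set \<Rightarrow> (complex \<Rightarrow> real^3) \<Rightarrow> bool" where
  "Ck_on 0 S F = continuous_on S F"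
| "Ck_on (Suc k) S F =
     ((\<forall>z\<in>S. F differentiable (at z)) \<and> Ck_on k S (dx F) \<and> Ck_on k S (dy F))"

definition smooth_on3 :: "complex set \<Rightarrow> (complex \<Rightarrow> real^3) \<Rightarrow> bool" where
  "smooth_on3 S F \<longleftrightarrow> (\<forall>k. Ck_on k S F)"

definition conformal_immersion_at :: "(complex \<Rightarrow> real^3) \<Rightarrow> complex \<Rightarrow> bool" where
  "conformal_immersion_at F z \<longleftrightarrow>
     inj (frechet_derivative F (at z)) \<and>
     nil_inner (F z) (dx F z) (dx F z) = nil_inner (F z) (dy F z) (dy F z) \<and>
     nil_inner (F z) (dx F z) (dy F z) = 0"

text \<open>Tension field (in the coordinates x1,x2,x3), and mean curvature vector
  H = tension / (2 lambda^2) of a conformal immersion with conformal factor lambda^2.\<close>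

definition nil_tension :: "(complex \<Rightarrow> real^3) \<Rightarrow> complex \<Rightarrow> real^3" where
  "nil_tension F z = (\<chi> k. dx (dx F) z $ k + dy (dy F) z $ k +
      (\<Sum>i\<in>UNIV. \<Sum>j\<in>UNIV. nil_christoffel k i j (F z) *
         (dx F z $ i * dx F z $ j + dy F z $ i * dy F z $ j)))"

definition nil_mean_curvature_vector :: "(complex \<Rightarrow> real^3) \<Rightarrow> complex \<Rightarrow> real^3" where
  "nil_mean_curvature_vector F z =
     (1 / (2 * nil_inner (F z) (dx F z) (dx F z))) *\<^sub>R nil_tension F z"

text \<open>phi_k: components of f^{-1} d_z f (left translation to the identity), d_z = (d_x - i d_y)/2.\<close>

definition nil_phi :: "(complex \<Rightarrow> real^3) \<Rightarrow> complex \<Rightarrow> 3 \<Rightarrow> complex" where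
  "nil_phi F z k =
     (let L = (\<lambda>w. nil_mult (nil_inv (F z)) (F w))
      in (complex_of_real (dx L z $ k) - \<i> * complex_of_real (dy L z $ k)) / 2)"

definition spinor_data :: "(complex \<Rightarrow> real^3) \<Rightarrow> complex \<Rightarrow> complex \<Rightarrow> complex \<Rightarrow> bool" where
  "spinor_data F z \<psi>1 \<psi>2 \<longleftrightarrow>
     nil_phi F z 1 = (cnj \<psi>2)\<^sup>2 - \<psi>1\<^sup>2 \<and>
     nil_phi F z 2 = \<i> * ((cnj \<psi>2)\<^sup>2 + \<psi>1\<^sup>2) \<and>
     nil_phi F z 3 = 2 * \<psi>1 * cnj \<psi>2"

definition local_rep :: "('a \<Rightarrow> 'b) \<Rightarrow> 'a set \<Rightarrow> ('a \<Rightarrow> complex) \<Rightarrow> complex \<Rightarrow> 'b" where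
  "local_rep f U \<phi> = f \<circ> inv_into U \<phi>"

definition conformal_minimal_immersion ::
    "'a topology \<Rightarrow> ('a set \<times> ('a \<Rightarrow> complex)) set \<Rightarrow> ('a \<Rightarrow> real^3) \<Rightarrow> bool" where
  "conformal_minimal_immersion X A f \<longleftrightarrow>
     (\<forall>(U,\<phi>)\<in>A. smooth_on3 (\<phi> ` U) (local_rep f U \<phi>) \<and>
        (\<forall>z\<in>\<phi> ` U. conformal_immersion_at (local_rep f U \<phi>) z \<and>
                     nil_mean_curvature_vector (local_rep f U \<phi>) z = 0))"

definition nowhere_vertical_upward ::
    "'a topology \<Rightarrow> ('a set \<times> ('a \<Rightarrow> complex)) set \<Rightarrow> ('a \<Rightarrow> real^3) \<Rightarrow> bool" where
  "nowhere_vertical_upward X A f \<longleftrightarrow>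
     (\<forall>(U,\<phi>)\<in>A. \<forall>z\<in>\<phi> ` U. \<forall>\<psi>1 \<psi>2.
        spinor_data (local_rep f U \<phi>) z \<psi>1 \<psi>2 \<longrightarrow> cmod \<psi>2 < cmod \<psi>1)"

definition normal_gauss_map ::
    "'a topology \<Rightarrow> ('a set \<times> ('a \<Rightarrow> complex)) set \<Rightarrow> ('a \<Rightarrow> real^3) \<Rightarrow> ('a \<Rightarrow> complex) \<Rightarrow> bool" where
  "normal_gauss_map X A f g \<longleftrightarrow>
     (\<forall>(U,\<phi>)\<in>A. \<forall>p\<in>U. \<exists>\<psi>1 \<psi>2.
        spinor_data (local_rep f U \<phi>) (\<phi> p) \<psi>1 \<psi>2 \<and> g p = \<psi>2 / cnj \<psi>1)"

end

theory Submission
  imports Defs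
begin

abbreviation cr where "cr \<equiv> complex_of_real"


lemma vnth_id[derivative_intros]: "((\<lambda>x. x $ i) has_derivative (\<lambda>x. x $ i)) F"
  by (rule bounded_linear_imp_has_derivative) (rule bounded_linear_vec_nth)

lemma pd3_inner: "pd3 (\<lambda>y. nil_inner y v w) i x =
   ((axis i 1$2 * v$1 - axis i 1$1 * v$2)/2) * (w$3 + (x$2* w$1 - x$1* w$2)/2)
 + (v$3 + (x$2* v$1 - x$1* v$2)/2) * ((axis i 1$2 * w$1 - axis i 1$1* w$2)/2)"
proof -
  have "((\<lambda>y. nil_inner y v w) has_derivative (\<lambda>d.
     ((d$2 * v$1 - d$1 * v$2)/2) * (w$3 + (x$2* w$1 - x$1* w$2)/2)
 + (v$3 + (x$2* v$1 - x$1* v$2)/2) * ((d$2 * w$1 - d$1* w$2)/2))) (at x)"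
    unfolding nil_inner_def
    by (auto intro!: derivative_eq_intros simp: fun_eq_iff field_simps)
  then show ?thesis unfolding pd3_def by (simp add: frechet_derivative_at[symmetric])
qed

definition Minv :: "real^3 \<Rightarrow> real^3^3" where
 "Minv x = (\<chi> i j. if i = 1 \<and> j = 1 then 1 else if i = 2 \<and> j = 2 then 1
   else if i = 1 \<and> j = 3 then - x$2/2 else if i = 3 \<and> j = 1 then - x$2/2
   else if i = 2 \<and> j = 3 then x$1/2 else if i = 3 \<and> j = 2 then x$1/2
   else if i = 3 \<and> j = 3 then 1 + (x$1^2 + x$2^2)/4 else 0)"

lemma metric_Minv: "nil_metric_matrix x ** Minv x = mat 1"
  unfolding nil_metric_matrix_def Minv_def matrix_matrix_mult_def mat_def
  by (simp add: vec_eq_iff forall_3 sum_3 nil_inner_def axis_def field_simps power2_eq_square)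

lemma matrix_inv_eq: "matrix_inv (nil_metric_matrix x) = Minv x"
proof -
  have 1: "nil_metric_matrix x ** Minv x = mat 1" by (rule metric_Minv)
  have 2: "Minv x ** nil_metric_matrix x = mat 1" using 1 matrix_left_right_inverse by blast
  have "\<exists>A'. nil_metric_matrix x ** A' = mat 1 \<and> A' ** nil_metric_matrix x = mat 1" using 1 2 by blast
  then have 3: "nil_metric_matrix x ** matrix_inv (nil_metric_matrix x) = mat 1 \<and> matrix_inv (nil_metric_matrix x) ** nil_metric_matrix x = mat 1"
    unfolding matrix_inv_def by (rule someI_ex)
  have "matrix_inv (nil_metric_matrix x) = matrix_inv (nil_metric_matrix x) ** (nil_metric_matrix x ** Minv x)"
    using 1 by simp
  also have "\<dots> = Minv x" using 3 by (simp add: matrix_mul_assoc)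
  finally show ?thesis .
qed

lemma chr: "nil_christoffel k i j x = (\<Sum>l\<in>UNIV. Minv x $ k $ l *
        (pd3 (\<lambda>y. nil_inner y (axis j 1) (axis l 1)) i x + pd3 (\<lambda>y. nil_inner y (axis i 1) (axis l 1)) j x
         - pd3 (\<lambda>y. nil_inner y (axis i 1) (axis j 1)) l x)) / 2"
  by (simp only: nil_christoffel_def matrix_inv_eq) (simp add: nil_metric_matrix_def)

lemmas chr_simps = chr pd3_inner sum_3 Minv_def axis_def


lemma tension1: "nil_tension F z $ 1 = dx (dx F) z $ 1 + dy (dy F) z $ 1 +
  ((F z $ 2 / 2) * (dx F z $ 1 * dx F z $ 2 + dy F z $ 1 * dy F z $ 2)
   - (F z $ 1 / 2) * (dx F z $ 2 ^ 2 + dy F z $ 2 ^ 2)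
   + (dx F z $ 2 * dx F z $ 3 + dy F z $ 2 * dy F z $ 3))"
  by (simp add: nil_tension_def chr_simps field_simps power2_eq_square)
lemma tension2: "nil_tension F z $ 2 = dx (dx F) z $ 2 + dy (dy F) z $ 2 +
  (- (F z $ 2 / 2) * (dx F z $ 1 ^ 2 + dy F z $ 1 ^ 2)
   + (F z $ 1 / 2) * (dx F z $ 1 * dx F z $ 2 + dy F z $ 1 * dy F z $ 2)
   - (dx F z $ 1 * dx F z $ 3 + dy F z $ 1 * dy F z $ 3))"
  by (simp add: nil_tension_def chr_simps field_simps power2_eq_square)
lemma tension3: "nil_tension F z $ 3 = dx (dx F) z $ 3 + dy (dy F) z $ 3 +
  (- (F z $ 1 * F z $ 2 / 4) * (dx F z $ 1 ^ 2 + dy F z $ 1 ^ 2)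
   + ((F z $ 1 ^ 2 - F z $ 2 ^ 2) / 4) * (dx F z $ 1 * dx F z $ 2 + dy F z $ 1 * dy F z $ 2)
   + (F z $ 1 * F z $ 2 / 4) * (dx F z $ 2 ^ 2 + dy F z $ 2 ^ 2)
   - (F z $ 1 / 2) * (dx F z $ 1 * dx F z $ 3 + dy F z $ 1 * dy F z $ 3)
   - (F z $ 2 / 2) * (dx F z $ 2 * dx F z $ 3 + dy F z $ 2 * dy F z $ 3))"
  by (simp add: nil_tension_def chr_simps field_simps power2_eq_square)


lemma line_deriv:
  fixes f :: "complex \<Rightarrow> real"
  assumes "(f has_derivative Df) (at (z + c * complex_of_real s))"
  shows "((\<lambda>t. f (z + c * complex_of_real t)) has_real_derivative Df c) (at s)"
proof -
  have l: "linear Df" using assms has_derivative_linear by blast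
  have "((\<lambda>t. z + c * complex_of_real t) has_derivative (\<lambda>t. c * complex_of_real t)) (at s)"
    by (auto intro!: derivative_eq_intros)
  from has_derivative_compose[OF this assms]
  have "((\<lambda>t. f (z + c * complex_of_real t)) has_derivative (\<lambda>t. Df (c * complex_of_real t))) (at s)"
    by (simp add: o_def)
  moreover have "(\<lambda>t. Df (c * complex_of_real t)) = (\<lambda>t. t * Df c)"
  proof
    fix t show "Df (c * complex_of_real t) = t * Df c"
      using linear_scale[OF l, of t c] by (simp add: scaleR_conv_of_real mult.commute)
  qed
  moreover have "(*) (Df c) = (\<lambda>t. t * Df c)" by (auto simp: fun_eq_iff)
  ultimately show ?thesis by (simp add: has_field_derivative_def)
qed

lemma clairaut_real:
  fixes f :: "complex \<Rightarrow> real"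
  assumes S: "open S" "z \<in> S"
    and Df: "\<And>w. w \<in> S \<Longrightarrow> (f has_derivative Df w) (at w)"
    and D1: "((\<lambda>w. Df w 1) has_derivative D1) (at z)"
    and D2: "((\<lambda>w. Df w \<i>) has_derivative D2) (at z)"
  shows "D1 \<i> = D2 1"
proof (rule ccontr)
  assume ne: "D1 \<i> \<noteq> D2 1"
  define e where "e = \<bar>D1 \<i> - D2 1\<bar> / 9"
  have e: "e > 0" using ne by (simp add: e_def)
  have l1: "linear D1" using D1 has_derivative_linear by blast
  have l2: "linear D2" using D2 has_derivative_linear by blast
  obtain d1 where d1: "d1 > 0" "\<And>y. norm (y - z) < d1 \<Longrightarrow> \<bar>Df y 1 - Df z 1 - D1 (y - z)\<bar> \<le> e * norm (y - z)"
    using D1 e unfolding has_derivative_at_alt by (metis real_norm_def)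
  obtain d2 where d2: "d2 > 0" "\<And>y. norm (y - z) < d2 \<Longrightarrow> \<bar>Df y \<i> - Df z \<i> - D2 (y - z)\<bar> \<le> e * norm (y - z)"
    using D2 e unfolding has_derivative_at_alt by (metis real_norm_def)
  obtain d3 where d3: "d3 > 0" "ball z d3 \<subseteq> S" using S open_contains_ball by blast
  define h where "h = Min {d1, d2, d3} / 4"
  have h: "h > 0" "2 * h < d1" "2 * h < d2" "2 * h < d3" using d1 d2 d3 by (auto simp: h_def)
  have inS: "z + a + \<i> * b \<in> S" if "0 \<le> a" "a \<le> h" "0 \<le> b" "b \<le> h" for a b :: real
  proof -
    have "norm (complex_of_real a + \<i> * complex_of_real b) \<le> norm (complex_of_real a) + norm (\<i> * complex_of_real b)"
      by (rule norm_triangle_ineq)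
    also have "\<dots> \<le> 2 * h" using that by (simp add: norm_mult)
    finally have n: "norm (complex_of_real a + \<i> * complex_of_real b) < d3" using h by simp
    have "dist z (z + (a + \<i> * b)) = dist (z + 0) (z + (a + \<i> * b))" by simp
    also have "\<dots> = norm (complex_of_real a + \<i> * complex_of_real b)" by (simp only: dist_add_cancel dist_0_norm)
    finally have "dist z (z + (a + \<i> * b)) < d3" using n by simp
    then show ?thesis using d3 by (auto simp: add.assoc)
  qed
  have nrm: "norm (complex_of_real a + \<i> * complex_of_real b) \<le> 2 * h"
    if "0 \<le> a" "a \<le> h" "0 \<le> b" "b \<le> h" for a b :: real
  proof -
    have "norm (complex_of_real a + \<i> * complex_of_real b) \<le> norm (complex_of_real a) + norm (\<i> * complex_of_real b)"
      by (rule norm_triangle_ineq)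
    also have "\<dots> \<le> 2 * h" using that by (simp add: norm_mult)
    finally show ?thesis .
  qed
  define \<Delta> where "\<Delta> = f (z + h + \<i> * h) - f (z + h) - f (z + \<i> * h) + f z"
  define ps where "ps = (\<lambda>t::real. f (z + \<i> * h + (1::complex) * complex_of_real t) - f (z + (1::complex) * complex_of_real t))"
  define ps' where "ps' = (\<lambda>t::real. Df (z + \<i> * h + (1::complex) * complex_of_real t) 1 - Df (z + (1::complex) * complex_of_real t) 1)"
  have "\<exists>\<xi>. 0 < \<xi> \<and> \<xi> < h \<and> ps h - ps 0 = (h - 0) * ps' \<xi>"
  proof (rule MVT2)
    show "0 < h" using h by simp
    fix s :: real assume s: "0 \<le> s" "s \<le> h"
    have a: "(f has_derivative Df (z + \<i> * h + 1 * complex_of_real s)) (at (z + \<i> * h + 1 * complex_of_real s))"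
      using Df inS[of s h] s h by (simp add: add_ac)
    have b: "(f has_derivative Df (z + 1 * complex_of_real s)) (at (z + 1 * complex_of_real s))"
      using Df inS[of s 0] s h by (simp add: add_ac)
    show "(ps has_real_derivative ps' s) (at s)"
      unfolding ps_def ps'_def by (intro derivative_intros line_deriv a b)
  qed
  then obtain \<xi> where xi: "0 < \<xi>" "\<xi> < h"
     "\<Delta> = h * (Df (z + \<i> * h + \<xi>) 1 - Df (z + \<xi>) 1)"
    by (auto simp: \<Delta>_def ps_def ps'_def algebra_simps)
  have A1: "\<bar>Df (z + \<i> * h + \<xi>) 1 - Df z 1 - D1 (\<i> * h + \<xi>)\<bar> \<le> e * (2 * h)"
  proof -
    have n: "norm (\<i> * h + \<xi>) \<le> 2 * h" using nrm[of \<xi> h] xi h by (simp add: add_ac)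
    have "\<bar>Df (z + \<i> * h + \<xi>) 1 - Df z 1 - D1 (\<i> * h + \<xi>)\<bar> \<le> e * norm (\<i> * h + \<xi>)"
      using d1(2)[of "z + \<i> * h + \<xi>"] n h by (simp add: add.assoc)
    also have "\<dots> \<le> e * (2 * h)" using n e by (simp add: mult_left_mono)
    finally show ?thesis .
  qed
  have A2: "\<bar>Df (z + \<xi>) 1 - Df z 1 - D1 (\<xi>)\<bar> \<le> e * (2 * h)"
  proof -
    have n: "norm (complex_of_real \<xi>) \<le> 2 * h" using xi h by simp
    have "\<bar>Df (z + \<xi>) 1 - Df z 1 - D1 \<xi>\<bar> \<le> e * norm (complex_of_real \<xi>)"
      using d1(2)[of "z + \<xi>"] n h by simp
    also have "\<dots> \<le> e * (2 * h)" using n e by (simp add: mult_left_mono)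
    finally show ?thesis .
  qed
  have L1: "D1 (\<i> * h + \<xi>) - D1 \<xi> = h * D1 \<i>"
    using linear_add[OF l1] linear_scale[OF l1, of h \<i>] by (simp add: scaleR_conv_of_real mult.commute)
  have E1: "\<bar>\<Delta> - h * (h * D1 \<i>)\<bar> \<le> h * (e * (4 * h))"
  proof -
    have "\<bar>(Df (z + \<i> * h + \<xi>) 1 - Df (z + \<xi>) 1) - h * D1 \<i>\<bar> \<le> e * (4 * h)"
      using A1 A2 L1 by linarith
    then have 1: "h * \<bar>(Df (z + \<i> * h + \<xi>) 1 - Df (z + \<xi>) 1) - h * D1 \<i>\<bar> \<le> h * (e * (4 * h))"
      using h by (simp add: mult_left_mono)
    have "\<Delta> - h * (h * D1 \<i>) = h * ((Df (z + \<i> * h + \<xi>) 1 - Df (z + \<xi>) 1) - h * D1 \<i>)"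
      using xi(3) by (simp add: algebra_simps)
    then have "\<bar>\<Delta> - h * (h * D1 \<i>)\<bar> = h * \<bar>(Df (z + \<i> * h + \<xi>) 1 - Df (z + \<xi>) 1) - h * D1 \<i>\<bar>"
      using h by (simp add: abs_mult)
    then show ?thesis using 1 by simp
  qed
  define ch where "ch = (\<lambda>t::real. f (z + 1 * complex_of_real h + \<i> * complex_of_real t) - f (z + \<i> * complex_of_real t))"
  define ch' where "ch' = (\<lambda>t::real. Df (z + 1 * complex_of_real h + \<i> * complex_of_real t) \<i> - Df (z + \<i> * complex_of_real t) \<i>)"
  have "\<exists>\<eta>. 0 < \<eta> \<and> \<eta> < h \<and> ch h - ch 0 = (h - 0) * ch' \<eta>"
  proof (rule MVT2)
    show "0 < h" using h by simp
    fix s :: real assume s: "0 \<le> s" "s \<le> h"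
    have a: "(f has_derivative Df (z + 1 * complex_of_real h + \<i> * complex_of_real s)) (at (z + 1 * complex_of_real h + \<i> * complex_of_real s))"
      using Df inS[of h s] s h by (simp add: add_ac)
    have b: "(f has_derivative Df (z + \<i> * complex_of_real s)) (at (z + \<i> * complex_of_real s))"
      using Df inS[of 0 s] s h by (simp add: add_ac)
    show "(ch has_real_derivative ch' s) (at s)"
      unfolding ch_def ch'_def by (intro derivative_intros line_deriv a b)
  qed
  then obtain \<eta> where eta: "0 < \<eta>" "\<eta> < h"
     "\<Delta> = h * (Df (z + h + \<i> * \<eta>) \<i> - Df (z + \<i> * \<eta>) \<i>)"
    by (auto simp: \<Delta>_def ch_def ch'_def algebra_simps)
  have B1: "\<bar>Df (z + h + \<i> * \<eta>) \<i> - Df z \<i> - D2 (h + \<i> * \<eta>)\<bar> \<le> e * (2 * h)"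
  proof -
    have n: "norm (h + \<i> * \<eta>) \<le> 2 * h" using nrm[of h \<eta>] eta h by (simp add: add_ac)
    have "\<bar>Df (z + h + \<i> * \<eta>) \<i> - Df z \<i> - D2 (h + \<i> * \<eta>)\<bar> \<le> e * norm (h + \<i> * \<eta>)"
      using d2(2)[of "z + h + \<i> * \<eta>"] n h by (simp add: add.assoc)
    also have "\<dots> \<le> e * (2 * h)" using n e by (simp add: mult_left_mono)
    finally show ?thesis .
  qed
  have B2: "\<bar>Df (z + \<i> * \<eta>) \<i> - Df z \<i> - D2 (\<i> * \<eta>)\<bar> \<le> e * (2 * h)"
  proof -
    have n: "norm (\<i> * complex_of_real \<eta>) \<le> 2 * h" using eta h by (simp add: norm_mult)
    have "\<bar>Df (z + \<i> * \<eta>) \<i> - Df z \<i> - D2 (\<i> * \<eta>)\<bar> \<le> e * norm (\<i> * complex_of_real \<eta>)"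
      using d2(2)[of "z + \<i> * \<eta>"] n h by simp
    also have "\<dots> \<le> e * (2 * h)" using n e by (simp add: mult_left_mono)
    finally show ?thesis .
  qed
  have L2: "D2 (h + \<i> * \<eta>) - D2 (\<i> * \<eta>) = h * D2 1"
    using linear_add[OF l2] linear_scale[OF l2, of h 1] by (simp add: scaleR_conv_of_real mult.commute)
  have E2: "\<bar>\<Delta> - h * (h * D2 1)\<bar> \<le> h * (e * (4 * h))"
  proof -
    have "\<bar>(Df (z + h + \<i> * \<eta>) \<i> - Df (z + \<i> * \<eta>) \<i>) - h * D2 1\<bar> \<le> e * (4 * h)"
      using B1 B2 L2 by linarith
    then have 1: "h * \<bar>(Df (z + h + \<i> * \<eta>) \<i> - Df (z + \<i> * \<eta>) \<i>) - h * D2 1\<bar> \<le> h * (e * (4 * h))"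
      using h by (simp add: mult_left_mono)
    have "\<Delta> - h * (h * D2 1) = h * ((Df (z + h + \<i> * \<eta>) \<i> - Df (z + \<i> * \<eta>) \<i>) - h * D2 1)"
      using eta(3) by (simp add: algebra_simps)
    then have "\<bar>\<Delta> - h * (h * D2 1)\<bar> = h * \<bar>(Df (z + h + \<i> * \<eta>) \<i> - Df (z + \<i> * \<eta>) \<i>) - h * D2 1\<bar>"
      using h by (simp add: abs_mult)
    then show ?thesis using 1 by simp
  qed
  have "\<bar>h * (h * D1 \<i>) - h * (h * D2 1)\<bar> \<le> h * (e * (8 * h))" using E1 E2 by linarith
  then have "(h * h) * \<bar>D1 \<i> - D2 1\<bar> \<le> (h * h) * (8 * e)"
    using h by (simp add: abs_mult right_diff_distrib[symmetric] mult_ac)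
  then have "\<bar>D1 \<i> - D2 1\<bar> \<le> 8 * e" using h by simp
  then show False using e unfolding e_def by (simp add: field_simps)
qed


definition Mlin :: "real^3 \<Rightarrow> real^3 \<Rightarrow> real^3" where
  "Mlin b v = vector [v$1, v$2, v$3 + (b$1 * v$2 - b$2 * v$1)/2]"

lemma Mlin_comp[simp]: "Mlin b v $ 1 = v$1" "Mlin b v $ 2 = v$2" "Mlin b v $ 3 = v$3 + (b$1 * v$2 - b$2 * v$1)/2"
  by (simp_all add: Mlin_def)

lemma nil_mult_Mlin: "nil_mult b x = b + Mlin b x"
  by (simp add: nil_mult_def Mlin_def vec_eq_iff forall_3 field_simps)

lemma Mlin_linear: "bounded_linear (Mlin b)"
proof -
  have "linear (Mlin b)"
    by (rule linearI) (simp_all add: Mlin_def vec_eq_iff forall_3 field_simps)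
  then show ?thesis by (simp add: linear_conv_bounded_linear)
qed

definition E3 :: "real^3 \<Rightarrow> real^3 \<Rightarrow> real^3 \<Rightarrow> 3 \<Rightarrow> complex" where
  "E3 P A B k = (complex_of_real (Mlin (-P) A $ k) - \<i> * complex_of_real (Mlin (-P) B $ k)) / 2"

lemma PHI:
  assumes "(F has_derivative DF) (at z)"
  shows "nil_phi F z k = E3 (F z) (DF 1) (DF \<i>) k"
proof -
  let ?L = "\<lambda>w. nil_mult (nil_inv (F z)) (F w)"
  have "?L = (\<lambda>w. - F z + Mlin (- F z) (F w))"
    by (simp add: nil_mult_Mlin nil_inv_def)
  moreover have "((\<lambda>w. - F z + Mlin (- F z) (F w)) has_derivative (\<lambda>v. 0 + Mlin (- F z) (DF v))) (at z)"
    by (rule has_derivative_add[OF has_derivative_const bounded_linear.has_derivative[OF Mlin_linear assms]])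
  ultimately have d: "(?L has_derivative (\<lambda>v. Mlin (- F z) (DF v))) (at z)" by simp
  show ?thesis
    unfolding nil_phi_def Let_def dx_def dy_def E3_def frechet_derivative_at[OF d, symmetric] by simp
qed

lemma E3_1: "E3 P A B 1 = (complex_of_real (A$1) - \<i> * complex_of_real (B$1)) / 2"
  and E3_2: "E3 P A B 2 = (complex_of_real (A$2) - \<i> * complex_of_real (B$2)) / 2"
  and E3_3: "E3 P A B 3 = (complex_of_real (A$3 + (P$2 * A$1 - P$1 * A$2)/2)
                           - \<i> * complex_of_real (B$3 + (P$2 * B$1 - P$1 * B$2)/2)) / 2"
  by (simp_all add: E3_def algebra_simps)



definition QQ :: "complex \<Rightarrow> complex \<Rightarrow> complex \<Rightarrow> complex \<Rightarrow> complex" where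
  "QQ r1 r2 r3 r4 = 2 * (r1 * r4 + r2 * r3)"

definition TT1 where "TT1 a1 b1 a2 b2 a3 b3 p1 p2 = (p2/2) * QQ a1 b1 a2 b2 - (p1/2) * QQ a2 b2 a2 b2 + QQ a2 b2 a3 b3"
definition TT2 where "TT2 a1 b1 a2 b2 a3 b3 p1 p2 = - (p2/2) * QQ a1 b1 a1 b1 + (p1/2) * QQ a1 b1 a2 b2 - QQ a1 b1 a3 b3"
definition TT3 where "TT3 a1 b1 a2 b2 a3 b3 p1 p2 = - (p1*p2/4) * QQ a1 b1 a1 b1 + ((p1^2 - p2^2)/4) * QQ a1 b1 a2 b2
      + (p1*p2/4) * QQ a2 b2 a2 b2 - (p1/2) * QQ a1 b1 a3 b3 - (p2/2) * QQ a2 b2 a3 b3"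

lemma alg_core:
  fixes al be x y p1 p2 a1 a2 a3 b1 b2 b3 :: complex
  assumes "al \<noteq> 0" "x \<noteq> 0"
    and "a1 = y^2 - al^2" "a2 = \<i>*(y^2 + al^2)"
    and "a3 = 2*al*y - (p2*a1 - p1*a2)/2"
    and "b1 = be^2 - x^2" "b2 = -\<i>*(be^2 + x^2)" "b3 = 2*x*be - (p2*b1 - p1*b2)/2"
  shows "((-TT3 a1 b1 a2 b2 a3 b3 p1 p2/4 + (b2*a1 + p2*(-TT1 a1 b1 a2 b2 a3 b3 p1 p2/4) - b1*a2 - p1*(-TT2 a1 b1 a2 b2 a3 b3 p1 p2/4))/2) * al^2
      - (2*al*y) * (- (-TT1 a1 b1 a2 b2 a3 b3 p1 p2/4 + \<i> * (-TT2 a1 b1 a2 b2 a3 b3 p1 p2/4))/2))/(2*(al^2)^2)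
     = \<i> * x^2 * (1 - (be/x)*(y/al))^2 / 2"
  using assms(1,2) unfolding assms(3-) TT1_def TT2_def TT3_def QQ_def
  by (simp add: field_simps) algebra



lemma bridge:
  fixes A B P :: "real^3"
  defines "a1 \<equiv> (cr (A$1) - \<i> * cr (B$1))/2" and "b1 \<equiv> (cr (A$1) + \<i> * cr (B$1))/2"
    and "a2 \<equiv> (cr (A$2) - \<i> * cr (B$2))/2" and "b2 \<equiv> (cr (A$2) + \<i> * cr (B$2))/2"
    and "a3 \<equiv> (cr (A$3) - \<i> * cr (B$3))/2" and "b3 \<equiv> (cr (A$3) + \<i> * cr (B$3))/2"
  shows "cr ((P$2 / 2) * (A$1 * A$2 + B$1 * B$2) - (P$1 / 2) * (A$2 ^ 2 + B$2 ^ 2)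
       + (A$2 * A$3 + B$2 * B$3)) = TT1 a1 b1 a2 b2 a3 b3 (cr (P$1)) (cr (P$2))"
    and "cr (- (P$2 / 2) * (A$1 ^ 2 + B$1 ^ 2) + (P$1 / 2) * (A$1 * A$2 + B$1 * B$2)
       - (A$1 * A$3 + B$1 * B$3)) = TT2 a1 b1 a2 b2 a3 b3 (cr (P$1)) (cr (P$2))"
    and "cr (- (P$1 * P$2 / 4) * (A$1 ^ 2 + B$1 ^ 2)
       + ((P$1 ^ 2 - P$2 ^ 2) / 4) * (A$1 * A$2 + B$1 * B$2)
       + (P$1 * P$2 / 4) * (A$2 ^ 2 + B$2 ^ 2)
       - (P$1 / 2) * (A$1 * A$3 + B$1 * B$3)
       - (P$2 / 2) * (A$2 * A$3 + B$2 * B$3)) = TT3 a1 b1 a2 b2 a3 b3 (cr (P$1)) (cr (P$2))"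
  unfolding assms TT1_def TT2_def TT3_def QQ_def
  by (simp_all add: field_simps power2_eq_square; algebra)+



lemma chart:
  assumes RS: "riemann_surface X A" and UA: "(U,\<phi>) \<in> A"
  shows "openin X U" "open (\<phi> ` U)" "inj_on \<phi> U" "U \<subseteq> topspace X"
    "continuous_map (subtopology X U) euclidean \<phi>"
    "homeomorphic_map (subtopology X U) (top_of_set (\<phi> ` U)) \<phi>"
proof -
  have h: "openin X U \<and> open (\<phi> ` U) \<and> homeomorphic_map (subtopology X U) (top_of_set (\<phi> ` U)) \<phi>"
    using RS UA unfolding riemann_surface_def by blast
  then show "openin X U" "open (\<phi> ` U)" "homeomorphic_map (subtopology X U) (top_of_set (\<phi> ` U)) \<phi>" by auto
  show "U \<subseteq> topspace X" using h openin_subset by blast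
  then show "inj_on \<phi> U" using homeomorphic_imp_injective_map[of "subtopology X U"] h
    by (metis inf.absorb_iff2 topspace_subtopology)
  show "continuous_map (subtopology X U) euclidean \<phi>"
    using h homeomorphic_imp_continuous_map continuous_map_into_fulltopology by blast
qed

lemma chart_inv:
  assumes RS: "riemann_surface X A" and UA: "(U,\<phi>) \<in> A"
  shows "\<And>p. p \<in> U \<Longrightarrow> inv_into U \<phi> (\<phi> p) = p"
    "\<And>w. w \<in> \<phi> ` U \<Longrightarrow> \<phi> (inv_into U \<phi> w) = w \<and> inv_into U \<phi> w \<in> U"
  using chart[OF RS UA] by (auto simp: inv_into_into f_inv_into_f)

lemma chart_open_image:
  assumes RS: "riemann_surface X A" and UA: "(U,\<phi>) \<in> A" and W: "openin X W" "W \<subseteq> U"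
  shows "open (\<phi> ` W)"
proof -
  note c = chart[OF RS UA]
  have "openin (subtopology X U) W" using W by (simp add: openin_subtopology_alt) (metis W(1) W(2) inf.absorb_iff2 openin_subtopology_Int2 openin_subtopology_alt)
  then have "openin (top_of_set (\<phi> ` U)) (\<phi> ` W)"
    using homeomorphic_map_openness_eq[OF c(6)] by blast
  then show ?thesis using c(2) openin_open_trans by blast
qed

lemma chart_preimage:
  assumes RS: "riemann_surface X A" and UA: "(U,\<phi>) \<in> A" and B: "open B"
  shows "openin X {p \<in> U. \<phi> p \<in> B}"
proof -
  note c = chart[OF RS UA]
  have "openin (subtopology X U) {p \<in> topspace (subtopology X U). \<phi> p \<in> B}"
    using openin_continuous_map_preimage[OF c(5)] B by simp
  moreover have "topspace (subtopology X U) = U" using c(4) by auto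
  ultimately show ?thesis using openin_trans_full c(1) by fastforce
qed

lemma smooth_C2:
  assumes "smooth_on3 S F" "z \<in> S"
  shows "F differentiable (at z)" "dx F differentiable (at z)" "dy F differentiable (at z)"
proof -
  have "Ck_on (Suc (Suc 0)) S F" using assms unfolding smooth_on3_def by blast
  then show "F differentiable (at z)" "dx F differentiable (at z)" "dy F differentiable (at z)"
    using assms(2) by auto
qed



definition mu :: "(complex \<Rightarrow> real^3) \<Rightarrow> complex \<Rightarrow> complex" where
  "mu F w = - (nil_phi F w 1 + \<i> * nil_phi F w 2) / 2"

definition wz :: "(complex \<Rightarrow> complex) \<Rightarrow> complex \<Rightarrow> complex" where
  "wz G w = (frechet_derivative G (at w) 1 - \<i> * frechet_derivative G (at w) \<i>) / 2"

lemma BL: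
  assumes RS: "riemann_surface X A" and NV: "nowhere_vertical_upward X A f"
    and NG: "normal_gauss_map X A f g" and UA: "(U,\<phi>) \<in> A" and w: "w \<in> \<phi> ` U"
  shows "mu (local_rep f U \<phi>) w \<noteq> 0"
    "nil_phi (local_rep f U \<phi>) w 3 = 2 * mu (local_rep f U \<phi>) w * cnj (g (inv_into U \<phi> w))"
    "nil_phi (local_rep f U \<phi>) w 1 = mu (local_rep f U \<phi>) w * (cnj (g (inv_into U \<phi> w))^2 - 1)"
    "nil_phi (local_rep f U \<phi>) w 2 = \<i> * mu (local_rep f U \<phi>) w * (cnj (g (inv_into U \<phi> w))^2 + 1)"
    "cmod (g (inv_into U \<phi> w)) < 1"
    "\<exists>al be. spinor_data (local_rep f U \<phi>) w al be \<and> cmod be < cmod al \<and> g (inv_into U \<phi> w) = be / cnj al"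
proof -
  obtain p where p: "p \<in> U" "w = \<phi> p" using w by blast
  have ip: "inv_into U \<phi> w = p" using chart_inv(1)[OF RS UA p(1)] p by simp
  obtain al be where ab: "spinor_data (local_rep f U \<phi>) (\<phi> p) al be" "g p = be / cnj al"
    using NG UA p(1) unfolding normal_gauss_map_def by fastforce
  have lt: "cmod be < cmod al" using NV UA w ab(1) p unfolding nowhere_vertical_upward_def by fastforce
  then have al: "al \<noteq> 0" by auto
  then have cal: "cnj al \<noteq> 0" by simp
  have ph: "nil_phi (local_rep f U \<phi>) w 1 = (cnj be)^2 - al^2"
     "nil_phi (local_rep f U \<phi>) w 2 = \<i> * ((cnj be)^2 + al^2)"
     "nil_phi (local_rep f U \<phi>) w 3 = 2 * al * cnj be"
    using ab(1) p(2) unfolding spinor_data_def by auto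
  have m: "mu (local_rep f U \<phi>) w = al^2"
    unfolding mu_def ph by (simp add: field_simps power2_eq_square)
  show "\<exists>al be. spinor_data (local_rep f U \<phi>) w al be \<and> cmod be < cmod al \<and> g (inv_into U \<phi> w) = be / cnj al"
    using ab lt ip p by auto
  show "mu (local_rep f U \<phi>) w \<noteq> 0" using m al by simp
  show "nil_phi (local_rep f U \<phi>) w 3 = 2 * mu (local_rep f U \<phi>) w * cnj (g (inv_into U \<phi> w))"
    unfolding ph m ip ab(2) using al by (simp add: field_simps power2_eq_square)
  show "nil_phi (local_rep f U \<phi>) w 1 = mu (local_rep f U \<phi>) w * (cnj (g (inv_into U \<phi> w))^2 - 1)"
    unfolding ph m ip ab(2) using al by (simp add: field_simps power2_eq_square)
  show "nil_phi (local_rep f U \<phi>) w 2 = \<i> * mu (local_rep f U \<phi>) w * (cnj (g (inv_into U \<phi> w))^2 + 1)"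
    unfolding ph m ip ab(2) using al by (simp add: field_simps power2_eq_square)
  show "cmod (g (inv_into U \<phi> w)) < 1"
    unfolding ip ab(2) using lt al by (simp add: norm_divide)
qed

lemma quot_deriv:
  fixes N M :: "complex \<Rightarrow> complex"
  assumes "(N has_derivative LN) (at z)" "(M has_derivative LM) (at z)" "M z \<noteq> 0"
  shows "((\<lambda>w. cnj (N w / (2 * M w))) has_derivative
          (\<lambda>h. cnj ((LN h * M z - N z * LM h) / (2 * (M z)^2)))) (at z)"
proof -
  have "((\<lambda>w. N w / (2 * M w)) has_derivative
          (\<lambda>h. (LN h * M z - N z * LM h) / (2 * (M z)^2))) (at z)"
    using assms by (auto intro!: derivative_eq_intros simp: fun_eq_iff field_simps power2_eq_square)
  from bounded_linear.has_derivative[OF bounded_linear_cnj this] show ?thesis .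
qed

lemma wz_of:
  assumes "(G has_derivative (\<lambda>h. cnj (LQ h))) (at z)"
  shows "wz G z = cnj ((LQ 1 + \<i> * LQ \<i>) / 2)"
  unfolding wz_def frechet_derivative_at[OF assms, symmetric] by (simp add: field_simps)

lemma wz_local:
  assumes "(G has_derivative L) (at z)" "open S" "z \<in> S" "\<And>w. w \<in> S \<Longrightarrow> G w = H w"
  shows "wz H z = wz G z" "(H has_derivative L) (at z)"
proof -
  show "(H has_derivative L) (at z)" using has_derivative_transform_within_open[OF assms(1-3)] assms(4) by blast
  then show "wz H z = wz G z"
    unfolding wz_def using frechet_derivative_at assms(1) by metis
qed



lemma inner_pos:
  assumes "v \<noteq> 0" shows "nil_inner x v v > 0"
proof -
  have "nil_inner x v v = (v$1)^2 + (v$2)^2 + (v$3 + (x$2 * v$1 - x$1 * v$2)/2)^2"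
    by (simp add: nil_inner_def power2_eq_square)
  moreover have "v$1 \<noteq> 0 \<or> v$2 \<noteq> 0 \<or> v$3 \<noteq> 0" using assms by (metis exhaust_3 vec_eq_iff zero_index)
  moreover
  { assume "v$1 = 0" "v$2 = 0" then have "(v$1)^2 + (v$2)^2 + (v$3 + (x$2 * v$1 - x$1 * v$2)/2)^2 = (v$3)^2" by simp }
  ultimately show ?thesis
    by (cases "v$1 = 0 \<and> v$2 = 0") (auto simp: add_pos_nonneg add_nonneg_pos)
qed

lemma tension_zero:
  assumes "conformal_immersion_at F z" "nil_mean_curvature_vector F z = 0" "F differentiable (at z)"
  shows "nil_tension F z = 0"
proof -
  have d: "(F has_derivative frechet_derivative F (at z)) (at z)" using assms(3) frechet_derivative_works by blast
  have "linear (frechet_derivative F (at z))" using d has_derivative_linear by blast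
  then have "frechet_derivative F (at z) 0 = 0" by (simp add: linear_0)
  moreover have "inj (frechet_derivative F (at z))" using assms(1) unfolding conformal_immersion_at_def by blast
  ultimately have "dx F z \<noteq> 0" unfolding dx_def by (metis injD one_neq_zero)
  then have "nil_inner (F z) (dx F z) (dx F z) > 0" by (rule inner_pos)
  then show ?thesis using assms(2) unfolding nil_mean_curvature_vector_def by simp
qed

lemma vnth_comp: "(G has_derivative G') F \<Longrightarrow> ((\<lambda>x. G x $ i) has_derivative (\<lambda>x. G' x $ i)) F"
  by (rule bounded_linear.has_derivative[OF bounded_linear_vec_nth])

lemma cr_comp: "((g::_\<Rightarrow>real) has_derivative g') F \<Longrightarrow> ((\<lambda>x. cr (g x)) has_derivative (\<lambda>x. cr (g' x))) F"
  by (rule bounded_linear.has_derivative[OF bounded_linear_of_real])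



lemma sum3_helper: "(a::complex) + b + c = 0 \<Longrightarrow> c = t \<Longrightarrow> a + b = - t"
  by (simp add: add_eq_0_iff2 add.assoc)

lemma CL:
  assumes RS: "riemann_surface X A" and CMI: "conformal_minimal_immersion X A f"
    and NV: "nowhere_vertical_upward X A f" and NG: "normal_gauss_map X A f g"
    and UA: "(U,\<phi>) \<in> A" and z: "z \<in> \<phi> ` U"
  shows "(g \<circ> inv_into U \<phi>) differentiable (at z)"
    "mu (local_rep f U \<phi>) z * (1 - (g \<circ> inv_into U \<phi>) z * cnj ((g \<circ> inv_into U \<phi>) z))^2
       = 2 * \<i> * wz (g \<circ> inv_into U \<phi>) z"
proof -
  define F where "F = local_rep f U \<phi>"
  define S where "S = \<phi> ` U"
  define gl where "gl = g \<circ> inv_into U \<phi>"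
  have oS: "open S" using chart(2)[OF RS UA] by (simp add: S_def)
  have zS: "z \<in> S" using z by (simp add: S_def)
  have sm: "smooth_on3 S F" and ci: "\<And>w. w \<in> S \<Longrightarrow> conformal_immersion_at F w \<and> nil_mean_curvature_vector F w = 0"
    using CMI UA unfolding conformal_minimal_immersion_def F_def S_def by fastforce+
  have dF: "\<And>w. w \<in> S \<Longrightarrow> (F has_derivative frechet_derivative F (at w)) (at w)"
    using smooth_C2(1)[OF sm] frechet_derivative_works by blast
  define N where "N = (\<lambda>w. E3 (F w) (dx F w) (dy F w) 3)"
  define M where "M = (\<lambda>w. - (E3 (F w) (dx F w) (dy F w) 1 + \<i> * E3 (F w) (dx F w) (dy F w) 2) / 2)"
  have phiE: "\<And>w k. w \<in> S \<Longrightarrow> nil_phi F w k = E3 (F w) (dx F w) (dy F w) k"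
    using PHI[OF dF] unfolding dx_def dy_def by blast
  have MS: "\<And>w. w \<in> S \<Longrightarrow> M w = mu F w" unfolding M_def mu_def using phiE by simp
  have glS: "\<And>w. w \<in> S \<Longrightarrow> gl w = cnj (N w / (2 * M w))"
  proof -
    fix w assume w: "w \<in> S"
    have "nil_phi F w 3 = 2 * mu F w * cnj (g (inv_into U \<phi> w))" "mu F w \<noteq> 0"
      using BL[OF RS NV NG UA] w unfolding F_def S_def by auto
    then show "gl w = cnj (N w / (2 * M w))" using phiE[OF w] MS[OF w] unfolding N_def gl_def by simp
  qed
  have Mz: "M z \<noteq> 0" using MS[OF zS] BL(1)[OF RS NV NG UA z] unfolding F_def by simp
  define DF where "DF = frechet_derivative F (at z)"
  define D1 where "D1 = frechet_derivative (dx F) (at z)"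
  define D2 where "D2 = frechet_derivative (dy F) (at z)"
  have hF: "(F has_derivative DF) (at z)" using dF zS by (simp add: DF_def)
  have h1: "(dx F has_derivative D1) (at z)" using smooth_C2(2)[OF sm zS] frechet_derivative_works D1_def by blast
  have h2: "(dy F has_derivative D2) (at z)" using smooth_C2(3)[OF sm zS] frechet_derivative_works D2_def by blast
  have cl: "D1 \<i> $ k = D2 1 $ k" for k
  proof (rule clairaut_real[OF oS zS])
    fix w assume "w \<in> S"
    show "((\<lambda>w. F w $ k) has_derivative (\<lambda>h. frechet_derivative F (at w) h $ k)) (at w)"
      using vnth_comp[OF dF[OF \<open>w \<in> S\<close>]] .
  next
    show "((\<lambda>w. frechet_derivative F (at w) 1 $ k) has_derivative (\<lambda>h. D1 h $ k)) (at z)"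
      using vnth_comp[OF h1] unfolding dx_def .
  next
    show "((\<lambda>w. frechet_derivative F (at w) \<i> $ k) has_derivative (\<lambda>h. D2 h $ k)) (at z)"
      using vnth_comp[OF h2] unfolding dy_def .
  qed
  define LN where "LN = (\<lambda>h. (cr (D1 h $ 3 + (DF h $ 2 * dx F z $ 1 + F z $ 2 * D1 h $ 1 - (DF h $ 1 * dx F z $ 2 + F z $ 1 * D1 h $ 2)) / 2)
      - \<i> * cr (D2 h $ 3 + (DF h $ 2 * dy F z $ 1 + F z $ 2 * D2 h $ 1 - (DF h $ 1 * dy F z $ 2 + F z $ 1 * D2 h $ 2)) / 2)) / 2)"
  define LM where "LM = (\<lambda>h. - ((cr (D1 h $ 1) - \<i> * cr (D2 h $ 1)) / 2 + \<i> * ((cr (D1 h $ 2) - \<i> * cr (D2 h $ 2)) / 2)) / 2)"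
  have cF: "((\<lambda>w. F w $ k) has_derivative (\<lambda>h. DF h $ k)) (at z)" for k using vnth_comp[OF hF] .
  have c1: "((\<lambda>w. dx F w $ k) has_derivative (\<lambda>h. D1 h $ k)) (at z)" for k using vnth_comp[OF h1] .
  have c2: "((\<lambda>w. dy F w $ k) has_derivative (\<lambda>h. D2 h $ k)) (at z)" for k using vnth_comp[OF h2] .
  have hN: "(N has_derivative LN) (at z)"
    unfolding N_def E3_3 LN_def
    by (auto intro!: derivative_eq_intros cr_comp cF c1 c2 simp: fun_eq_iff field_simps)
  have hM: "(M has_derivative LM) (at z)"
    unfolding M_def E3_1 E3_2 LM_def
    by (auto intro!: derivative_eq_intros cr_comp cF c1 c2 simp: fun_eq_iff field_simps)
  have hG: "((\<lambda>w. cnj (N w / (2 * M w))) has_derivative (\<lambda>h. cnj ((LN h * M z - N z * LM h) / (2 * (M z)^2)))) (at z)"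
    by (rule quot_deriv[OF hN hM Mz])
  have glG: "wz gl z = wz (\<lambda>w. cnj (N w / (2 * M w))) z" "(gl has_derivative (\<lambda>h. cnj ((LN h * M z - N z * LM h) / (2 * (M z)^2)))) (at z)"
    using wz_local[OF hG oS zS, of gl] glS by auto
  show "(g \<circ> inv_into U \<phi>) differentiable (at z)" using glG(2) gl_def differentiable_def by blast
  have wzG: "wz gl z = cnj (((LN 1 + \<i> * LN \<i>)/2 * M z - N z * ((LM 1 + \<i> * LM \<i>)/2)) / (2 * (M z)^2))"
    unfolding glG(1) wz_of[OF hG] using Mz by (simp add: field_simps)
  define P where "P = F z"
  define Av where "Av = dx F z"
  define Bv where "Bv = dy F z"
  define Uv where "Uv = D1 1"
  define Vv where "Vv = D2 \<i>"
  have DF1: "DF 1 = Av" "DF \<i> = Bv" unfolding Av_def Bv_def DF_def dx_def dy_def by simp_all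
  have cl': "D1 \<i> = D2 1" using cl by (simp add: vec_eq_iff)
  obtain al be where ab: "spinor_data F z al be" "cmod be < cmod al" "gl z = be / cnj al"
    using BL(6)[OF RS NV NG UA z] unfolding F_def gl_def by auto
  have al: "al \<noteq> 0" using ab(2) by auto
  have x0: "cnj al \<noteq> 0" using al by simp
  have sp1: "E3 P Av Bv 1 = (cnj be)^2 - al^2" and sp2: "E3 P Av Bv 2 = \<i> * ((cnj be)^2 + al^2)"
    and sp3: "E3 P Av Bv 3 = 2 * al * cnj be"
    using ab(1) phiE[OF zS] unfolding spinor_data_def P_def Av_def Bv_def by auto
  define a1 where "a1 = (cr (Av$1) - \<i> * cr (Bv$1))/2"
  define b1 where "b1 = (cr (Av$1) + \<i> * cr (Bv$1))/2"
  define a2 where "a2 = (cr (Av$2) - \<i> * cr (Bv$2))/2"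
  define b2 where "b2 = (cr (Av$2) + \<i> * cr (Bv$2))/2"
  define a3 where "a3 = (cr (Av$3) - \<i> * cr (Bv$3))/2"
  define b3 where "b3 = (cr (Av$3) + \<i> * cr (Bv$3))/2"
  have ea1: "a1 = (cnj be)^2 - al^2" using sp1 unfolding E3_1 a1_def .
  have ea2: "a2 = \<i> * ((cnj be)^2 + al^2)" using sp2 unfolding E3_2 a2_def .
  have eb1: "b1 = be^2 - (cnj al)^2" using arg_cong[OF ea1, of cnj] unfolding a1_def b1_def by simp
  have eb2: "b2 = - \<i> * (be^2 + (cnj al)^2)" using arg_cong[OF ea2, of cnj] unfolding a2_def b2_def by simp
  have e3: "(cr (Av$3 + (P$2 * Av$1 - P$1 * Av$2)/2) - \<i> * cr (Bv$3 + (P$2 * Bv$1 - P$1 * Bv$2)/2))/2 = 2 * al * cnj be"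
    using sp3 unfolding E3_3 .
  have ea3: "a3 = 2 * al * cnj be - (cr (P$2) * a1 - cr (P$1) * a2)/2"
  proof -
    have "a3 = (cr (Av$3 + (P$2 * Av$1 - P$1 * Av$2)/2) - \<i> * cr (Bv$3 + (P$2 * Bv$1 - P$1 * Bv$2)/2))/2
       - (cr (P$2) * a1 - cr (P$1) * a2)/2"
      unfolding a3_def a1_def a2_def by (simp add: field_simps)
    then show ?thesis unfolding e3 .
  qed
  have eb3: "b3 = 2 * cnj al * be - (cr (P$2) * b1 - cr (P$1) * b2)/2"
    using arg_cong[OF ea3, of cnj] unfolding a3_def b3_def a1_def b1_def a2_def b2_def by simp
  have tz: "nil_tension F z = 0" using tension_zero ci[OF zS] smooth_C2(1)[OF sm zS] by blast
  have dd: "dx (dx F) z = Uv" "dy (dy F) z = Vv" unfolding Uv_def Vv_def D1_def D2_def dx_def dy_def by simp_all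
  note br = bridge[where A=Av and B=Bv and P=P, folded a1_def b1_def a2_def b2_def a3_def b3_def]
  have t1: "cr (Uv$1) + cr (Vv$1) = - TT1 a1 b1 a2 b2 a3 b3 (cr (P$1)) (cr (P$2))"
  proof -
    have "nil_tension F z $ 1 = 0" using tz by simp
    then have "cr (nil_tension F z $ 1) = 0" by simp
    then show ?thesis using br(1) unfolding tension1 dd Av_def[symmetric] Bv_def[symmetric] P_def[symmetric] of_real_add
      by (rule sum3_helper)
  qed
  have t2: "cr (Uv$2) + cr (Vv$2) = - TT2 a1 b1 a2 b2 a3 b3 (cr (P$1)) (cr (P$2))"
  proof -
    have "nil_tension F z $ 2 = 0" using tz by simp
    then have "cr (nil_tension F z $ 2) = 0" by simp
    then show ?thesis using br(2) unfolding tension2 dd Av_def[symmetric] Bv_def[symmetric] P_def[symmetric] of_real_add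
      by (rule sum3_helper)
  qed
  have t3: "cr (Uv$3) + cr (Vv$3) = - TT3 a1 b1 a2 b2 a3 b3 (cr (P$1)) (cr (P$2))"
  proof -
    have "nil_tension F z $ 3 = 0" using tz by simp
    then have "cr (nil_tension F z $ 3) = 0" by simp
    then show ?thesis using br(3) unfolding tension3 dd Av_def[symmetric] Bv_def[symmetric] P_def[symmetric] of_real_add
      by (rule sum3_helper)
  qed
  have dM: "(LM 1 + \<i> * LM \<i>)/2 = - (-TT1 a1 b1 a2 b2 a3 b3 (cr (P$1)) (cr (P$2))/4 + \<i> * (-TT2 a1 b1 a2 b2 a3 b3 (cr (P$1)) (cr (P$2))/4))/2"
    unfolding t1[symmetric] t2[symmetric]
    unfolding LM_def Uv_def Vv_def cl' by (simp add: field_simps)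
  have dN: "(LN 1 + \<i> * LN \<i>)/2 = -TT3 a1 b1 a2 b2 a3 b3 (cr (P$1)) (cr (P$2))/4
     + (b2*a1 + cr (P$2)*(-TT1 a1 b1 a2 b2 a3 b3 (cr (P$1)) (cr (P$2))/4) - b1*a2 - cr (P$1)*(-TT2 a1 b1 a2 b2 a3 b3 (cr (P$1)) (cr (P$2))/4))/2"
    unfolding t1[symmetric] t2[symmetric] t3[symmetric]
    unfolding LN_def Uv_def Vv_def cl' DF1 a1_def a2_def b1_def b2_def
      P_def[symmetric] Av_def[symmetric] Bv_def[symmetric]
    by (simp add: field_simps)
  have Nz: "N z = 2 * al * cnj be" using sp3 unfolding N_def P_def Av_def Bv_def .
  have Mz': "M z = al^2" unfolding M_def using sp1 sp2 unfolding P_def Av_def Bv_def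
    by (simp add: field_simps power2_eq_square)
  have core: "(((LN 1 + \<i> * LN \<i>)/2) * al^2 - (2*al*cnj be) * ((LM 1 + \<i> * LM \<i>)/2))/(2*(al^2)^2)
     = \<i> * (cnj al)^2 * (1 - (be/cnj al)*(cnj be/al))^2 / 2"
    unfolding dN dM by (rule alg_core[OF al x0 ea1 ea2 ea3 eb1 eb2 eb3])
  have wz2: "wz gl z = cnj (\<i> * (cnj al)^2 * (1 - (be/cnj al)*(cnj be/al))^2 / 2)"
    unfolding wzG Nz Mz' core[symmetric] ..
  have "mu F z = al^2" using MS[OF zS] Mz' by simp
  then show "mu (local_rep f U \<phi>) z * (1 - (g \<circ> inv_into U \<phi>) z * cnj ((g \<circ> inv_into U \<phi>) z))^2
       = 2 * \<i> * wz (g \<circ> inv_into U \<phi>) z"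
    unfolding F_def[symmetric] gl_def[symmetric] wz2 ab(3) using al by (simp add: field_simps)
qed




lemma cx_decomp: "(v::complex) = Re v *\<^sub>R 1 + Im v *\<^sub>R \<i>"
  by (simp add: complex_eq_iff)

lemma lin_decomp: assumes "linear L" shows "L v = Re v *\<^sub>R L 1 + Im v *\<^sub>R L \<i>"
  using linear_add[OF assms] linear_scale[OF assms] cx_decomp[of v] by metis

lemma E3_scale:
  assumes "linear DG"
  shows "E3 P (DG h) (DG (\<i> * h)) k = h * E3 P (DG 1) (DG \<i>) k"
proof -
  have l: "linear (\<lambda>v. Mlin (-P) v $ k)"
    using linear_compose[OF bounded_linear.linear[OF Mlin_linear] bounded_linear.linear[OF bounded_linear_vec_nth]]
    unfolding o_def .
  have l2: "linear (\<lambda>v. Mlin (-P) (DG v) $ k)"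
    using linear_compose[OF assms l] unfolding o_def .
  define m1 where "m1 = Mlin (-P) (DG 1) $ k"
  define mi where "mi = Mlin (-P) (DG \<i>) $ k"
  have a: "Mlin (-P) (DG h) $ k = Re h * m1 + Im h * mi"
    using lin_decomp[OF l2, of h] by (simp add: m1_def mi_def)
  have b: "Mlin (-P) (DG (\<i> * h)) $ k = - Im h * m1 + Re h * mi"
    using lin_decomp[OF l2, of "\<i> * h"] by (simp add: m1_def mi_def)
  show ?thesis unfolding E3_def a b m1_def[symmetric] mi_def[symmetric]
    by (simp add: complex_eq_iff algebra_simps)
qed

lemma PHI_chain:
  assumes G: "(G has_derivative DG) (at (h z))" and h: "(h has_field_derivative h') (at z)"
  shows "nil_phi (G \<circ> h) z k = h' * nil_phi G (h z) k"
proof -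
  have "((G \<circ> h) has_derivative (DG \<circ> (\<lambda>v. h' * v))) (at z)"
    using has_derivative_compose[OF has_field_derivative_imp_has_derivative[OF h] G] by (simp add: o_def)
  then have "nil_phi (G \<circ> h) z k = E3 (G (h z)) (DG h') (DG (\<i> * h')) k"
    using PHI by (simp add: o_def mult.commute)
  also have "\<dots> = h' * E3 (G (h z)) (DG 1) (DG \<i>) k"
    using E3_scale has_derivative_linear[OF G] by blast
  also have "\<dots> = h' * nil_phi G (h z) k" using PHI[OF G] by simp
  finally show ?thesis .
qed

lemma wz_chain:
  assumes G: "(G has_derivative DG) (at (h z))" and h: "(h has_field_derivative h') (at z)"
  shows "wz (G \<circ> h) z = h' * wz G (h z)"
proof -
  have "((G \<circ> h) has_derivative (\<lambda>v. DG (h' * v))) (at z)"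
    using has_derivative_compose[OF has_field_derivative_imp_has_derivative[OF h] G] by (simp add: o_def)
  then have e: "wz (G \<circ> h) z = (DG h' - \<i> * DG (\<i> * h'))/2"
    unfolding wz_def by (simp add: frechet_derivative_at[symmetric] mult.commute)
  have l: "linear DG" using has_derivative_linear[OF G] .
  have eq1: "DG h' = Re h' *\<^sub>R DG 1 + Im h' *\<^sub>R DG \<i>" and eq2: "DG (\<i> * h') = - Im h' *\<^sub>R DG 1 + Re h' *\<^sub>R DG \<i>"
    using lin_decomp[OF l, of h'] lin_decomp[OF l, of "\<i> * h'"] by simp_all
  show ?thesis unfolding e eq1 eq2 unfolding wz_def frechet_derivative_at[OF G, symmetric]
    by (simp add: scaleR_conv_of_real complex_eq_iff algebra_simps)
qed

lemma wz_scale: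
  assumes G: "(G has_derivative DG) (at z)"
  shows "wz (\<lambda>w. c * G w) z = c * wz G z"
proof -
  have "((\<lambda>w. c * G w) has_derivative (\<lambda>v. c * DG v)) (at z)"
    using G by (auto intro!: derivative_eq_intros)
  then have "wz (\<lambda>w. c * G w) z = (c * DG 1 - \<i> * (c * DG \<i>))/2"
    unfolding wz_def by (simp add: frechet_derivative_at[symmetric])
  then show ?thesis unfolding wz_def frechet_derivative_at[OF G, symmetric]
    by (simp add: algebra_simps)
qed

lemma nil_rot_linear: "bounded_linear (nil_rot \<theta>)"
proof -
  have "linear (nil_rot \<theta>)"
    by (rule linearI) (simp_all add: nil_rot_def vec_eq_iff forall_3 algebra_simps)
  then show ?thesis by (simp add: linear_conv_bounded_linear)
qed

lemma nil_rot_comp[simp]: "nil_rot \<theta> x $ 1 = cos \<theta> * x$1 - sin \<theta> * x$2"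
  "nil_rot \<theta> x $ 2 = sin \<theta> * x$1 + cos \<theta> * x$2" "nil_rot \<theta> x $ 3 = x$3"
  by (simp_all add: nil_rot_def)

lemma PHI_rot:
  assumes F: "(F has_derivative DF) (at z)"
  shows "nil_phi (\<lambda>w. nil_iso p \<theta> (F w)) z 1 = cr (cos \<theta>) * nil_phi F z 1 - cr (sin \<theta>) * nil_phi F z 2"
    "nil_phi (\<lambda>w. nil_iso p \<theta> (F w)) z 2 = cr (sin \<theta>) * nil_phi F z 1 + cr (cos \<theta>) * nil_phi F z 2"
    "nil_phi (\<lambda>w. nil_iso p \<theta> (F w)) z 3 = nil_phi F z 3"
    "((\<lambda>w. nil_iso p \<theta> (F w)) has_derivative (\<lambda>v. Mlin p (nil_rot \<theta> (DF v)))) (at z)"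
proof -
  have e: "(\<lambda>w. nil_iso p \<theta> (F w)) = (\<lambda>w. p + Mlin p (nil_rot \<theta> (F w)))"
    by (simp add: nil_iso_def nil_mult_Mlin)
  have "((\<lambda>w. p + Mlin p (nil_rot \<theta> (F w))) has_derivative (\<lambda>v. 0 + Mlin p (nil_rot \<theta> (DF v)))) (at z)"
    by (rule has_derivative_add[OF has_derivative_const bounded_linear.has_derivative[OF Mlin_linear
          bounded_linear.has_derivative[OF nil_rot_linear F]]])
  then show d: "((\<lambda>w. nil_iso p \<theta> (F w)) has_derivative (\<lambda>v. Mlin p (nil_rot \<theta> (DF v)))) (at z)"
    unfolding e by simp
  have "cr ((cos \<theta>)^2 + (sin \<theta>)^2) = 1" by simp
  then have cs: "(cr (cos \<theta>))^2 + (cr (sin \<theta>))^2 = 1" by (simp only: of_real_add of_real_power)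
  show "nil_phi (\<lambda>w. nil_iso p \<theta> (F w)) z 1 = cr (cos \<theta>) * nil_phi F z 1 - cr (sin \<theta>) * nil_phi F z 2"
    unfolding PHI[OF d] PHI[OF F] E3_1 E3_2 by (simp add: field_simps)
  show "nil_phi (\<lambda>w. nil_iso p \<theta> (F w)) z 2 = cr (sin \<theta>) * nil_phi F z 1 + cr (cos \<theta>) * nil_phi F z 2"
    unfolding PHI[OF d] PHI[OF F] E3_1 E3_2 by (simp add: field_simps)
  show "nil_phi (\<lambda>w. nil_iso p \<theta> (F w)) z 3 = nil_phi F z 3"
    unfolding PHI[OF d] PHI[OF F] E3_3 using cs
    by (simp add: nil_iso_def nil_mult_def field_simps power2_eq_square) algebra
qed

lemma PHI_local:
  assumes "(F2 has_derivative D) (at z)" "open S" "z \<in> S" "\<And>w. w \<in> S \<Longrightarrow> F1 w = F2 w"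
  shows "nil_phi F1 z k = nil_phi F2 z k" "(F1 has_derivative D) (at z)"
proof -
  show d: "(F1 has_derivative D) (at z)" using has_derivative_transform_within_open[OF assms(1-3)] assms(4) by metis
  show "nil_phi F1 z k = nil_phi F2 z k" using PHI[OF d] PHI[OF assms(1)] assms(3,4) by simp
qed



lemma lin_eq:
  assumes "linear L1" "linear L2" "L1 1 = L2 1" "L1 \<i> = L2 \<i>"
  shows "L1 v = L2 v"
  using lin_decomp[OF assms(1), of v] lin_decomp[OF assms(2), of v] assms(3,4) by simp

lemma cx_parts: assumes "(cr a - \<i> * cr b)/2 = (cr c - \<i> * cr d)/2" shows "a = c" "b = d"
  using assms by (simp_all add: complex_eq_iff)

lemma LC:
  fixes F G :: "complex \<Rightarrow> real^3"
  assumes B: "convex B" "open B"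
    and dF: "\<And>z. z \<in> B \<Longrightarrow> (F has_derivative DF z) (at z)"
    and dG: "\<And>z. z \<in> B \<Longrightarrow> (G has_derivative DG z) (at z)"
    and ph: "\<And>z k. z \<in> B \<Longrightarrow> nil_phi F z k = nil_phi G z k"
  shows "\<exists>a. \<forall>z\<in>B. F z = nil_mult a (G z)"
proof -
  have lF: "\<And>z. z \<in> B \<Longrightarrow> linear (DF z)" using dF has_derivative_linear by blast
  have lG: "\<And>z. z \<in> B \<Longrightarrow> linear (DG z)" using dG has_derivative_linear by blast
  have lk: "linear (\<lambda>x. L x $ k)" if "linear L" for L :: "complex \<Rightarrow> real^3" and k
    using linear_compose[OF that bounded_linear.linear[OF bounded_linear_vec_nth]] by (simp add: o_def)
  have eqE: "\<And>z k. z \<in> B \<Longrightarrow> E3 (F z) (DF z 1) (DF z \<i>) k = E3 (G z) (DG z 1) (DG z \<i>) k"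
  proof -
    fix z k assume z: "z \<in> B"
    show "E3 (F z) (DF z 1) (DF z \<i>) k = E3 (G z) (DG z 1) (DG z \<i>) k"
      using ph[OF z, of k] unfolding PHI[OF dF[OF z]] PHI[OF dG[OF z]] .
  qed
  have c12: "DF z v $ k = DG z v $ k" if "z \<in> B" "k = 1 \<or> k = 2" for z v k
  proof (rule lin_eq[OF lk[OF lF[OF that(1)]] lk[OF lG[OF that(1)]]])
    show "DF z 1 $ k = DG z 1 $ k" "DF z \<i> $ k = DG z \<i> $ k"
      using eqE[OF that(1), of k] that(2) by (auto simp: E3_1 E3_2 complex_eq_iff)
  qed
  have "\<exists>c. \<forall>z\<in>B. F z $ k - G z $ k = c" if "k = 1 \<or> k = 2" for k
  proof (rule has_derivative_zero_constant[OF B(1)])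
    fix z assume z: "z \<in> B"
    have d: "((\<lambda>w. F w $ k - G w $ k) has_derivative (\<lambda>v. DF z v $ k - DG z v $ k)) (at z)"
      by (intro derivative_intros vnth_comp dF dG z)
    have e: "(\<lambda>v. DF z v $ k - DG z v $ k) = (\<lambda>v. 0)" using c12[OF z that] by auto
    show "((\<lambda>w. F w $ k - G w $ k) has_derivative (\<lambda>h. 0)) (at z within B)"
      using d unfolding e by (rule has_derivative_at_withinI)
  qed
  note ex = this
  obtain a1 where a1: "\<forall>z\<in>B. F z $ 1 - G z $ 1 = a1" using ex[of 1] by auto
  obtain a2 where a2: "\<forall>z\<in>B. F z $ 2 - G z $ 2 = a2" using ex[of 2] by auto
  have c3: "DF z v $ 3 - DG z v $ 3 - (a1 * DG z v $ 2 - a2 * DG z v $ 1)/2 = 0" if z: "z \<in> B" for z v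
  proof -
    have l1: "linear (\<lambda>v. Mlin (- F z) (DF z v) $ 3)" using lk[OF linear_compose[OF lF[OF z] bounded_linear.linear[OF Mlin_linear]]]
      unfolding o_def .
    have l2: "linear (\<lambda>v. Mlin (- G z) (DG z v) $ 3)" using lk[OF linear_compose[OF lG[OF z] bounded_linear.linear[OF Mlin_linear]]]
      unfolding o_def .
    have "Mlin (- F z) (DF z v) $ 3 = Mlin (- G z) (DG z v) $ 3"
    proof (rule lin_eq[OF l1 l2])
      show "Mlin (- F z) (DF z 1) $ 3 = Mlin (- G z) (DG z 1) $ 3" "Mlin (- F z) (DF z \<i>) $ 3 = Mlin (- G z) (DG z \<i>) $ 3"
        using cx_parts[OF eqE[OF z, of 3, unfolded E3_def]] by auto
    qed
    then have m: "DF z v $ 3 + (- F z $ 1 * DF z v $ 2 + F z $ 2 * DF z v $ 1) / 2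
        = DG z v $ 3 + (- G z $ 1 * DG z v $ 2 + G z $ 2 * DG z v $ 1) / 2" by simp
    have s1: "F z $ 1 = G z $ 1 + a1" "F z $ 2 = G z $ 2 + a2" using a1 a2 z by auto
    have s2: "DF z v $ 1 = DG z v $ 1" "DF z v $ 2 = DG z v $ 2" using c12[OF z, of 1 v] c12[OF z, of 2 v] by auto
    show ?thesis using m unfolding s1 s2 by (simp add: field_simps)
  qed
  have "\<exists>c. \<forall>z\<in>B. F z $ 3 - G z $ 3 - (a1 * G z $ 2 - a2 * G z $ 1)/2 = c"
  proof (rule has_derivative_zero_constant[OF B(1)])
    fix z assume z: "z \<in> B"
    have d: "((\<lambda>w. F w $ 3 - G w $ 3 - (a1 * G w $ 2 - a2 * G w $ 1)/2) has_derivative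
        (\<lambda>v. DF z v $ 3 - DG z v $ 3 - (a1 * DG z v $ 2 - a2 * DG z v $ 1)/2)) (at z)"
      by (auto intro!: derivative_eq_intros vnth_comp dF dG z simp: fun_eq_iff)
    have e: "(\<lambda>v. DF z v $ 3 - DG z v $ 3 - (a1 * DG z v $ 2 - a2 * DG z v $ 1)/2) = (\<lambda>v. 0)"
      using c3[OF z] by auto
    show "((\<lambda>w. F w $ 3 - G w $ 3 - (a1 * G w $ 2 - a2 * G w $ 1)/2) has_derivative (\<lambda>h. 0)) (at z within B)"
      using d unfolding e by (rule has_derivative_at_withinI)
  qed
  then obtain a3 where a3: "\<forall>z\<in>B. F z $ 3 - G z $ 3 - (a1 * G z $ 2 - a2 * G z $ 1)/2 = a3" by blast
  show ?thesis
  proof (intro exI ballI)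
    fix z assume z: "z \<in> B"
    show "F z = nil_mult (vector [a1, a2, a3]) (G z)"
    proof -
      have e1: "F z $ 1 = G z $ 1 + a1" using bspec[OF a1 z] by linarith
      have e2: "F z $ 2 = G z $ 2 + a2" using bspec[OF a2 z] by linarith
      have e3: "F z $ 3 = a3 + G z $ 3 + (a1 * G z $ 2 - a2 * G z $ 1)/2" using bspec[OF a3 z] by linarith
      show ?thesis unfolding vec_eq_iff forall_3 nil_mult_def vector_3 e1 e2 e3 by simp
    qed
  qed
qed


lemma nil_mult_solve: "x = nil_mult a y \<Longrightarrow> nil_mult x (- y) = a"
  by (simp add: nil_mult_def vec_eq_iff forall_3 field_simps)

lemma nil_mult_solve2: "nil_mult (nil_mult x (- y)) y = x"
  by (simp add: nil_mult_def vec_eq_iff forall_3 field_simps)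

lemma locally_const:
  assumes conn: "connected_space X"
    and loc: "\<And>q. q \<in> topspace X \<Longrightarrow> \<exists>N. openin X N \<and> q \<in> N \<and> (\<forall>p\<in>N. c p = c q)"
    and q0: "q0 \<in> topspace X" and q: "q \<in> topspace X"
  shows "c q = c q0"
proof -
  define T where "T = {p \<in> topspace X. c p = c q0}"
  have oT: "openin X T"
  proof (rule openin_subopen[THEN iffD2], rule ballI)
    fix p assume "p \<in> T"
    then have "p \<in> topspace X" by (simp add: T_def)
    then obtain N where N: "openin X N" "p \<in> N" "\<forall>p'\<in>N. c p' = c p" using loc by blast
    have cp: "c p = c q0" using \<open>p \<in> T\<close> unfolding T_def by blast
    have "N \<subseteq> T"
    proof
      fix p' assume p': "p' \<in> N"
      have "c p' = c p" using bspec[OF N(3) p'] .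
      then have "c p' = c q0" using cp by (rule trans)
      moreover have "p' \<in> topspace X" using openin_subset[OF N(1)] p' by blast
      ultimately show "p' \<in> T" unfolding T_def by blast
    qed
    then show "\<exists>N. openin X N \<and> p \<in> N \<and> N \<subseteq> T" using N by blast
  qed
  have cT: "closedin X T"
    unfolding closedin_def
  proof
    show "T \<subseteq> topspace X" by (auto simp: T_def)
    show "openin X (topspace X - T)"
    proof (rule openin_subopen[THEN iffD2], rule ballI)
      fix p assume p: "p \<in> topspace X - T"
      then have "p \<in> topspace X" by simp
      then obtain N where N: "openin X N" "p \<in> N" "\<forall>p'\<in>N. c p' = c p" using loc by blast
      have cp: "c p \<noteq> c q0" using p unfolding T_def by blast
      have "N \<subseteq> topspace X - T"
      proof
        fix p' assume p': "p' \<in> N"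
        have "c p' = c p" using bspec[OF N(3) p'] .
        then have "c p' \<noteq> c q0" using cp by simp
        moreover have "p' \<in> topspace X" using openin_subset[OF N(1)] p' by blast
        ultimately show "p' \<in> topspace X - T" unfolding T_def by blast
      qed
      then show "\<exists>N. openin X N \<and> p \<in> N \<and> N \<subseteq> topspace X - T" using N by blast
    qed
  qed
  have "T \<noteq> {}" using q0 by (auto simp: T_def)
  then have "T = topspace X" using conn oT cT unfolding connected_space_clopen_in by blast
  then show ?thesis using q by (auto simp: T_def)
qed



lemma chart_setup:
  assumes RS: "riemann_surface X A" and AUT: "riemann_aut X A \<gamma>" and q: "q \<in> topspace X"
  obtains U \<phi> V \<psi> where "(U,\<phi>) \<in> A" "q \<in> U" "(V,\<psi>) \<in> A" "\<gamma> q \<in> V"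
    "open (\<phi> ` (U \<inter> {p \<in> topspace X. \<gamma> p \<in> V}))"
    "(\<psi> \<circ> \<gamma> \<circ> inv_into U \<phi>) holomorphic_on (\<phi> ` (U \<inter> {p \<in> topspace X. \<gamma> p \<in> V}))"
    "\<And>z. z \<in> \<phi> ` (U \<inter> {p \<in> topspace X. \<gamma> p \<in> V}) \<Longrightarrow>
        inv_into U \<phi> z \<in> U \<and> inv_into U \<phi> z \<in> topspace X \<and> \<gamma> (inv_into U \<phi> z) \<in> V \<and>
        \<phi> (inv_into U \<phi> z) = z \<and> z \<in> \<phi> ` U \<and>
        (\<psi> \<circ> \<gamma> \<circ> inv_into U \<phi>) z \<in> \<psi> ` V \<and>
        inv_into V \<psi> ((\<psi> \<circ> \<gamma> \<circ> inv_into U \<phi>) z) = \<gamma> (inv_into U \<phi> z)"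
    "\<phi> q \<in> \<phi> ` (U \<inter> {p \<in> topspace X. \<gamma> p \<in> V})"
proof -
  have cov: "\<Union>(fst ` A) = topspace X" using RS unfolding riemann_surface_def by blast
  have hom: "homeomorphic_map X X \<gamma>" and hol: "riemann_holomorphic X A \<gamma>"
    using AUT unfolding riemann_aut_def by blast+
  have cg: "continuous_map X X \<gamma>" using homeomorphic_imp_continuous_map[OF hom] .
  have gq: "\<gamma> q \<in> topspace X" using continuous_map_image_subset_topspace[OF cg] q by blast
  have "q \<in> \<Union>(fst ` A)" using cov q by simp
  then obtain x where x: "x \<in> A" "q \<in> fst x" by blast
  obtain U \<phi> where "x = (U, \<phi>)" by (cases x)
  then have U: "(U,\<phi>) \<in> A" "q \<in> U" using x by auto
  have "\<gamma> q \<in> \<Union>(fst ` A)" using cov gq by simp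
  then obtain y where y: "y \<in> A" "\<gamma> q \<in> fst y" by blast
  obtain V \<psi> where "y = (V, \<psi>)" by (cases y)
  then have V: "(V,\<psi>) \<in> A" "\<gamma> q \<in> V" using y by auto
  define W where "W = U \<inter> {p \<in> topspace X. \<gamma> p \<in> V}"
  have oW: "openin X W" unfolding W_def
    using openin_Int[OF chart(1)[OF RS U(1)] openin_continuous_map_preimage[OF cg chart(1)[OF RS V(1)]]] .
  have WU: "W \<subseteq> U" by (auto simp: W_def)
  have oS: "open (\<phi> ` W)" using chart_open_image[OF RS U(1) oW WU] .
  have holS: "(\<psi> \<circ> \<gamma> \<circ> inv_into U \<phi>) holomorphic_on (\<phi> ` W)"
  proof -
    have "\<forall>(U,\<phi>)\<in>A. \<forall>(V,\<psi>)\<in>A.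
        (\<psi> \<circ> \<gamma> \<circ> inv_into U \<phi>) holomorphic_on (\<phi> ` (U \<inter> {p \<in> topspace X. \<gamma> p \<in> V}))"
      using hol unfolding riemann_holomorphic_def by (rule conjunct2)
    from bspec[OF bspec[OF this U(1), simplified] V(1)] show ?thesis unfolding W_def by simp
  qed
  have pts: "inv_into U \<phi> z \<in> U \<and> inv_into U \<phi> z \<in> topspace X \<and> \<gamma> (inv_into U \<phi> z) \<in> V \<and>
        \<phi> (inv_into U \<phi> z) = z \<and> z \<in> \<phi> ` U \<and>
        (\<psi> \<circ> \<gamma> \<circ> inv_into U \<phi>) z \<in> \<psi> ` V \<and>
        inv_into V \<psi> ((\<psi> \<circ> \<gamma> \<circ> inv_into U \<phi>) z) = \<gamma> (inv_into U \<phi> z)" if z: "z \<in> \<phi> ` W" for z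
  proof -
    obtain p where p: "p \<in> W" "z = \<phi> p" using z by blast
    have ip: "inv_into U \<phi> z = p" using chart_inv(1)[OF RS U(1)] p WU by auto
    have "p \<in> U" "p \<in> topspace X" "\<gamma> p \<in> V" using p(1) by (auto simp: W_def)
    then show ?thesis using ip p chart_inv(1)[OF RS V(1)] by auto
  qed
  show ?thesis
  proof (rule that[OF U V])
    show "open (\<phi> ` (U \<inter> {p \<in> topspace X. \<gamma> p \<in> V}))" using oS W_def by simp
    show "(\<psi> \<circ> \<gamma> \<circ> inv_into U \<phi>) holomorphic_on (\<phi> ` (U \<inter> {p \<in> topspace X. \<gamma> p \<in> V}))" using holS W_def by simp
    show "\<And>z. z \<in> \<phi> ` (U \<inter> {p \<in> topspace X. \<gamma> p \<in> V}) \<Longrightarrow> inv_into U \<phi> z \<in> U \<and> inv_into U \<phi> z \<in> topspace X \<and> \<gamma> (inv_into U \<phi> z) \<in> V \<and>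
        \<phi> (inv_into U \<phi> z) = z \<and> z \<in> \<phi> ` U \<and>
        (\<psi> \<circ> \<gamma> \<circ> inv_into U \<phi>) z \<in> \<psi> ` V \<and>
        inv_into V \<psi> ((\<psi> \<circ> \<gamma> \<circ> inv_into U \<phi>) z) = \<gamma> (inv_into U \<phi> z)"
      using pts W_def by simp
    show "\<phi> q \<in> \<phi> ` (U \<inter> {p \<in> topspace X. \<gamma> p \<in> V})" using U(2) V(2) q by auto
  qed
qed



lemma cis_cr: "cis \<theta> = cr (cos \<theta>) + \<i> * cr (sin \<theta>)" by (simp add: complex_eq_iff)
lemma cs_cr: "(cr (cos \<theta>))^2 + (cr (sin \<theta>))^2 = 1"
proof -
  have "cr ((cos \<theta>)^2 + (sin \<theta>)^2) = 1" by simp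
  then show ?thesis by (simp only: of_real_add of_real_power)
qed

lemma part_a:
  assumes RS: "riemann_surface X A" and CMI: "conformal_minimal_immersion X A f"
    and NV: "nowhere_vertical_upward X A f" and NG: "normal_gauss_map X A f g"
    and AUT: "riemann_aut X A \<gamma>"
    and H: "\<forall>q\<in>topspace X. f (\<gamma> q) = nil_iso p \<theta> (f q)"
    and q: "q \<in> topspace X"
  shows "g (\<gamma> q) = cis \<theta> * g q"
proof -
  obtain U \<phi> V \<psi> where UA: "(U,\<phi>) \<in> A" "q \<in> U" and VA: "(V,\<psi>) \<in> A" "\<gamma> q \<in> V"
    and oS: "open (\<phi> ` (U \<inter> {p \<in> topspace X. \<gamma> p \<in> V}))"
    and hol: "(\<psi> \<circ> \<gamma> \<circ> inv_into U \<phi>) holomorphic_on (\<phi> ` (U \<inter> {p \<in> topspace X. \<gamma> p \<in> V}))"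
    and pts: "\<And>z. z \<in> \<phi> ` (U \<inter> {p \<in> topspace X. \<gamma> p \<in> V}) \<Longrightarrow>
        inv_into U \<phi> z \<in> U \<and> inv_into U \<phi> z \<in> topspace X \<and> \<gamma> (inv_into U \<phi> z) \<in> V \<and>
        \<phi> (inv_into U \<phi> z) = z \<and> z \<in> \<phi> ` U \<and>
        (\<psi> \<circ> \<gamma> \<circ> inv_into U \<phi>) z \<in> \<psi> ` V \<and>
        inv_into V \<psi> ((\<psi> \<circ> \<gamma> \<circ> inv_into U \<phi>) z) = \<gamma> (inv_into U \<phi> z)"
    and zS: "\<phi> q \<in> \<phi> ` (U \<inter> {p \<in> topspace X. \<gamma> p \<in> V})"
    using chart_setup[OF RS AUT q] by blast
  define S where "S = \<phi> ` (U \<inter> {p \<in> topspace X. \<gamma> p \<in> V})"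
  define h where "h = \<psi> \<circ> \<gamma> \<circ> inv_into U \<phi>"
  define z where "z = \<phi> q"
  define f\<phi> where "f\<phi> = local_rep f U \<phi>"
  define f\<psi> where "f\<psi> = local_rep f V \<psi>"
  define Fg where "Fg = (\<lambda>w. f (\<gamma> (inv_into U \<phi> w)))"
  define G where "G = (\<lambda>w. nil_iso p \<theta> (f\<phi> w))"
  have zS': "z \<in> S" using zS by (simp add: S_def z_def)
  have iq: "inv_into U \<phi> z = q" using chart_inv(1)[OF RS UA(1) UA(2)] by (simp add: z_def)
  have ptz: "inv_into U \<phi> z \<in> U \<and> inv_into U \<phi> z \<in> topspace X \<and> \<gamma> (inv_into U \<phi> z) \<in> V \<and>
        \<phi> (inv_into U \<phi> z) = z \<and> z \<in> \<phi> ` U \<and> h z \<in> \<psi> ` V \<and> inv_into V \<psi> (h z) = \<gamma> (inv_into U \<phi> z)"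
    using pts zS' unfolding S_def h_def by blast
  have smF\<phi>: "smooth_on3 (\<phi> ` U) f\<phi>" using CMI UA(1) unfolding conformal_minimal_immersion_def f\<phi>_def by fastforce
  have smF\<psi>: "smooth_on3 (\<psi> ` V) f\<psi>" using CMI VA(1) unfolding conformal_minimal_immersion_def f\<psi>_def by fastforce
  have dF\<phi>: "(f\<phi> has_derivative frechet_derivative f\<phi> (at z)) (at z)"
    using smooth_C2(1)[OF smF\<phi>] ptz frechet_derivative_works by blast
  have dF\<psi>: "(f\<psi> has_derivative frechet_derivative f\<psi> (at (h z))) (at (h z))"
    using smooth_C2(1)[OF smF\<psi>] ptz frechet_derivative_works by blast
  have dh: "(h has_field_derivative deriv h z) (at z)"
    using holomorphic_derivI[OF hol[folded S_def h_def] oS[folded S_def] zS'] .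
  have eqFg: "Fg w = (f\<psi> \<circ> h) w" if "w \<in> S" for w
    using pts[OF that[unfolded S_def]] unfolding Fg_def f\<psi>_def h_def local_rep_def by simp
  have chain: "nil_phi Fg z k = deriv h z * nil_phi f\<psi> (h z) k" for k
  proof -
    have "nil_phi (f\<psi> \<circ> h) z k = deriv h z * nil_phi f\<psi> (h z) k" by (rule PHI_chain[OF dF\<psi> dh])
    moreover have "nil_phi Fg z k = nil_phi (f\<psi> \<circ> h) z k"
      using PHI_local[OF has_derivative_compose[OF has_field_derivative_imp_has_derivative[OF dh] dF\<psi>] oS[folded S_def] zS', of Fg]
        eqFg by (simp add: o_def)
    ultimately show ?thesis by simp
  qed
  note rot = PHI_rot[OF dF\<phi>, of p \<theta>]
  have eqG: "Fg w = G w" if "w \<in> S" for w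
    using pts[OF that[unfolded S_def]] H unfolding Fg_def G_def f\<phi>_def local_rep_def by simp
  have phiG: "nil_phi Fg z k = nil_phi G z k" for k
    using PHI_local[OF rot(4) oS[folded S_def] zS', of Fg] eqG unfolding G_def by simp
  have bl\<psi>: "nil_phi f\<psi> (h z) 3 = 2 * mu f\<psi> (h z) * cnj (g (\<gamma> q))"
    using BL(2)[OF RS NV NG VA(1), of "h z"] ptz iq unfolding f\<psi>_def by simp
  have bl\<phi>: "nil_phi f\<phi> z 3 = 2 * mu f\<phi> z * cnj (g q)" "mu f\<phi> z \<noteq> 0"
    using BL(2,1)[OF RS NV NG UA(1), of z] ptz iq unfolding f\<phi>_def by simp_all
  have m: "deriv h z * mu f\<psi> (h z) = cis \<theta> * mu f\<phi> z"
  proof -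
    have "deriv h z * mu f\<psi> (h z) = - (nil_phi Fg z 1 + \<i> * nil_phi Fg z 2) / 2"
      unfolding mu_def chain by (simp add: field_simps)
    also have "\<dots> = cis \<theta> * mu f\<phi> z"
      unfolding phiG G_def rot(1,2) mu_def cis_cr by (simp add: field_simps)
    finally show ?thesis .
  qed
  have "deriv h z * nil_phi f\<psi> (h z) 3 = nil_phi f\<phi> z 3"
    using chain[of 3] phiG[of 3] rot(3) unfolding G_def by simp
  then have "deriv h z * mu f\<psi> (h z) * cnj (g (\<gamma> q)) = mu f\<phi> z * cnj (g q)"
    unfolding bl\<psi> bl\<phi>(1) by (simp add: algebra_simps)
  then have "cis \<theta> * mu f\<phi> z * cnj (g (\<gamma> q)) = mu f\<phi> z * cnj (g q)"
    unfolding m .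
  then have "cis \<theta> * cnj (g (\<gamma> q)) = cnj (g q)" using bl\<phi>(2) by (simp add: field_simps)
  then have "cnj (cis \<theta> * cnj (g (\<gamma> q))) = g q" by (metis complex_cnj_cnj)
  then have "cis (-\<theta>) * g (\<gamma> q) = g q" by (simp add: cis_cnj)
  then have "cis \<theta> * (cis (-\<theta>) * g (\<gamma> q)) = cis \<theta> * g q" by simp
  then show ?thesis by (simp add: mult.assoc[symmetric] cis_mult)
qed



lemma cnj_cis_cr: "cnj (cis \<theta>) = cr (cos \<theta>) - \<i> * cr (sin \<theta>)" by (simp add: complex_eq_iff)

lemma part_b_local:
  assumes RS: "riemann_surface X A" and CMI: "conformal_minimal_immersion X A f"
    and NV: "nowhere_vertical_upward X A f" and NG: "normal_gauss_map X A f g"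
    and AUT: "riemann_aut X A \<gamma>"
    and H: "\<forall>q\<in>topspace X. g (\<gamma> q) = cis \<theta> * g q"
    and q: "q \<in> topspace X"
  shows "\<exists>N. openin X N \<and> q \<in> N \<and> (\<forall>p'\<in>N. nil_mult (f (\<gamma> p')) (- nil_iso 0 \<theta> (f p'))
                                        = nil_mult (f (\<gamma> q)) (- nil_iso 0 \<theta> (f q)))"
proof -
  obtain U \<phi> V \<psi> where UA: "(U,\<phi>) \<in> A" "q \<in> U" and VA: "(V,\<psi>) \<in> A" "\<gamma> q \<in> V"
    and oS: "open (\<phi> ` (U \<inter> {p \<in> topspace X. \<gamma> p \<in> V}))"
    and hol: "(\<psi> \<circ> \<gamma> \<circ> inv_into U \<phi>) holomorphic_on (\<phi> ` (U \<inter> {p \<in> topspace X. \<gamma> p \<in> V}))"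
    and pts: "\<And>z. z \<in> \<phi> ` (U \<inter> {p \<in> topspace X. \<gamma> p \<in> V}) \<Longrightarrow>
        inv_into U \<phi> z \<in> U \<and> inv_into U \<phi> z \<in> topspace X \<and> \<gamma> (inv_into U \<phi> z) \<in> V \<and>
        \<phi> (inv_into U \<phi> z) = z \<and> z \<in> \<phi> ` U \<and>
        (\<psi> \<circ> \<gamma> \<circ> inv_into U \<phi>) z \<in> \<psi> ` V \<and>
        inv_into V \<psi> ((\<psi> \<circ> \<gamma> \<circ> inv_into U \<phi>) z) = \<gamma> (inv_into U \<phi> z)"
    and qS: "\<phi> q \<in> \<phi> ` (U \<inter> {p \<in> topspace X. \<gamma> p \<in> V})"
    using chart_setup[OF RS AUT q] by blast
  define S where "S = \<phi> ` (U \<inter> {p \<in> topspace X. \<gamma> p \<in> V})"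
  define h where "h = \<psi> \<circ> \<gamma> \<circ> inv_into U \<phi>"
  define f\<phi> where "f\<phi> = local_rep f U \<phi>"
  define f\<psi> where "f\<psi> = local_rep f V \<psi>"
  define g\<phi> where "g\<phi> = g \<circ> inv_into U \<phi>"
  define g\<psi> where "g\<psi> = g \<circ> inv_into V \<psi>"
  define Fg where "Fg = (\<lambda>w. f (\<gamma> (inv_into U \<phi> w)))"
  define G where "G = (\<lambda>w. nil_iso 0 \<theta> (f\<phi> w))"
  have oS': "open S" using oS by (simp add: S_def)
  have ptz: "inv_into U \<phi> z \<in> U \<and> inv_into U \<phi> z \<in> topspace X \<and> \<gamma> (inv_into U \<phi> z) \<in> V \<and>
        \<phi> (inv_into U \<phi> z) = z \<and> z \<in> \<phi> ` U \<and> h z \<in> \<psi> ` V \<and> inv_into V \<psi> (h z) = \<gamma> (inv_into U \<phi> z)"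
    if "z \<in> S" for z
    using pts that unfolding S_def h_def by blast
  have smF\<phi>: "smooth_on3 (\<phi> ` U) f\<phi>" using CMI UA(1) unfolding conformal_minimal_immersion_def f\<phi>_def by fastforce
  have smF\<psi>: "smooth_on3 (\<psi> ` V) f\<psi>" using CMI VA(1) unfolding conformal_minimal_immersion_def f\<psi>_def by fastforce
  have dF\<phi>: "(f\<phi> has_derivative frechet_derivative f\<phi> (at z)) (at z)" if "z \<in> S" for z
    using smooth_C2(1)[OF smF\<phi>] ptz[OF that] frechet_derivative_works by blast
  have dF\<psi>: "(f\<psi> has_derivative frechet_derivative f\<psi> (at (h z))) (at (h z))" if "z \<in> S" for z
    using smooth_C2(1)[OF smF\<psi>] ptz[OF that] frechet_derivative_works by blast
  have dh: "(h has_field_derivative deriv h z) (at z)" if "z \<in> S" for z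
    using holomorphic_derivI[OF hol[folded S_def h_def] oS[folded S_def] that] .
  have eqFg: "Fg w = (f\<psi> \<circ> h) w" if "w \<in> S" for w
    using pts[OF that[unfolded S_def]] unfolding Fg_def f\<psi>_def h_def local_rep_def by simp
  have dFg: "(Fg has_derivative (frechet_derivative f\<psi> (at (h z)) \<circ> (\<lambda>v. deriv h z * v))) (at z)"
    and chain: "nil_phi Fg z k = deriv h z * nil_phi f\<psi> (h z) k" if z: "z \<in> S" for z k
  proof -
    have d: "((f\<psi> \<circ> h) has_derivative (frechet_derivative f\<psi> (at (h z)) \<circ> (\<lambda>v. deriv h z * v))) (at z)"
      using has_derivative_compose[OF has_field_derivative_imp_has_derivative[OF dh[OF z]] dF\<psi>[OF z]] by (simp add: o_def)
    have "nil_phi (f\<psi> \<circ> h) z k = deriv h z * nil_phi f\<psi> (h z) k" by (rule PHI_chain[OF dF\<psi>[OF z] dh[OF z]])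
    moreover note PHI_local[OF d oS' z, of Fg] eqFg
    ultimately show "nil_phi Fg z k = deriv h z * nil_phi f\<psi> (h z) k"
      "(Fg has_derivative (frechet_derivative f\<psi> (at (h z)) \<circ> (\<lambda>v. deriv h z * v))) (at z)" by auto
  qed
  note rot = PHI_rot[OF dF\<phi>, of _ 0 \<theta>]
  have phieq: "nil_phi Fg z k = nil_phi G z k" if z: "z \<in> S" for z k
  proof -
    define q' where "q' = inv_into U \<phi> z"
    have q': "q' \<in> topspace X" "inv_into V \<psi> (h z) = \<gamma> q'" "z \<in> \<phi> ` U" "h z \<in> \<psi> ` V"
      using ptz[OF z] by (auto simp: q'_def)
    have gpsi: "g\<psi> (h z) = cis \<theta> * g\<phi> z" using H q' by (simp add: g\<psi>_def g\<phi>_def q'_def)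
    note CL\<psi> = CL[OF RS CMI NV NG VA(1) q'(4)] and CL\<phi> = CL[OF RS CMI NV NG UA(1) q'(3)]
    obtain D\<psi> where D\<psi>: "(g\<psi> has_derivative D\<psi>) (at (h z))" using CL\<psi>(1) unfolding g\<psi>_def differentiable_def by blast
    obtain D\<phi> where D\<phi>: "(g\<phi> has_derivative D\<phi>) (at z)" using CL\<phi>(1) unfolding g\<phi>_def differentiable_def by blast
    have w1: "wz (g\<psi> \<circ> h) z = deriv h z * wz g\<psi> (h z)" by (rule wz_chain[OF D\<psi> dh[OF z]])
    have dsc: "((\<lambda>w. cis \<theta> * g\<phi> w) has_derivative (\<lambda>v. cis \<theta> * D\<phi> v)) (at z)"
      using D\<phi> by (auto intro!: derivative_eq_intros)
    have loc: "(\<lambda>w. cis \<theta> * g\<phi> w) w = (g\<psi> \<circ> h) w" if "w \<in> S" for w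
      using ptz[OF that] H by (simp add: g\<psi>_def g\<phi>_def)
    have w2: "wz (g\<psi> \<circ> h) z = cis \<theta> * wz g\<phi> z"
      using wz_local(1)[OF dsc oS' z, of "g\<psi> \<circ> h"] loc wz_scale[OF D\<phi>] by simp
    have nsq: "g\<psi> (h z) * cnj (g\<psi> (h z)) = g\<phi> z * cnj (g\<phi> z)"
      unfolding gpsi by (simp add: mult_ac cis_cnj cis_mult)
    have lt: "cmod (g\<phi> z) < 1" using BL(5)[OF RS NV NG UA(1) q'(3)] by (simp add: g\<phi>_def)
    have Dnz: "(1 - g\<phi> z * cnj (g\<phi> z))^2 \<noteq> 0"
    proof
      assume "(1 - g\<phi> z * cnj (g\<phi> z))^2 = 0"
      then have "g\<phi> z * cnj (g\<phi> z) = 1" by simp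
      then have "cr ((cmod (g\<phi> z))^2) = 1" by (metis complex_norm_square of_real_power)
      then have "(cmod (g\<phi> z))^2 = 1" by (metis of_real_eq_1_iff)
      then show False using lt norm_ge_zero[of "g\<phi> z"]
        by (metis abs_of_nonneg less_irrefl real_sqrt_abs real_sqrt_one)
    qed
    have K: "deriv h z * mu f\<psi> (h z) = cis \<theta> * mu f\<phi> z"
    proof -
      have "deriv h z * mu f\<psi> (h z) * (1 - g\<phi> z * cnj (g\<phi> z))^2
          = deriv h z * (2 * \<i> * wz g\<psi> (h z))"
        using CL\<psi>(2) nsq unfolding f\<psi>_def g\<psi>_def by (simp add: mult.assoc)
      also have "\<dots> = 2 * \<i> * (cis \<theta> * wz g\<phi> z)" using w1 w2 by simp
      also have "\<dots> = cis \<theta> * mu f\<phi> z * (1 - g\<phi> z * cnj (g\<phi> z))^2"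
        using CL\<phi>(2) unfolding f\<phi>_def g\<phi>_def by (simp add: mult_ac)
      finally show ?thesis using Dnz by simp
    qed
    have b\<psi>: "nil_phi f\<psi> (h z) 1 = mu f\<psi> (h z) * (cnj (g\<psi> (h z))^2 - 1)"
      "nil_phi f\<psi> (h z) 2 = \<i> * mu f\<psi> (h z) * (cnj (g\<psi> (h z))^2 + 1)"
      "nil_phi f\<psi> (h z) 3 = 2 * mu f\<psi> (h z) * cnj (g\<psi> (h z))"
      using BL(2,3,4)[OF RS NV NG VA(1) q'(4)] unfolding f\<psi>_def g\<psi>_def by simp_all
    have b\<phi>: "nil_phi f\<phi> z 1 = mu f\<phi> z * (cnj (g\<phi> z)^2 - 1)"
      "nil_phi f\<phi> z 2 = \<i> * mu f\<phi> z * (cnj (g\<phi> z)^2 + 1)"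
      "nil_phi f\<phi> z 3 = 2 * mu f\<phi> z * cnj (g\<phi> z)"
      using BL(2,3,4)[OF RS NV NG UA(1) q'(3)] unfolding f\<phi>_def g\<phi>_def by simp_all
    have cs: "(cr (cos \<theta>))^2 + (cr (sin \<theta>))^2 = 1" by (rule cs_cr)
    have ii: "\<i> * \<i> = -1" by simp
    have K': "deriv h z * mu f\<psi> (h z) = (cr (cos \<theta>) + \<i> * cr (sin \<theta>)) * mu f\<phi> z" using K cis_cr by simp
    have cg: "cnj (g\<psi> (h z)) = (cr (cos \<theta>) - \<i> * cr (sin \<theta>)) * cnj (g\<phi> z)"
      unfolding gpsi by (simp add: cnj_cis_cr)
    have "k = 1 \<or> k = 2 \<or> k = 3" by (rule exhaust_3)
    moreover have "nil_phi Fg z 1 = nil_phi G z 1"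
      unfolding chain[OF z] G_def rot(1)[OF z] b\<psi> b\<phi> cg using K' cs ii by algebra
    moreover have "nil_phi Fg z 2 = nil_phi G z 2"
      unfolding chain[OF z] G_def rot(2)[OF z] b\<psi> b\<phi> cg using K' cs ii by algebra
    moreover have "nil_phi Fg z 3 = nil_phi G z 3"
      unfolding chain[OF z] G_def rot(3)[OF z] b\<psi> b\<phi> cg using K' cs ii by algebra
    ultimately show ?thesis by auto
  qed
  have qS': "\<phi> q \<in> S" using qS by (simp add: S_def)
  obtain r where r: "r > 0" "ball (\<phi> q) r \<subseteq> S" using oS' qS' open_contains_ball by blast
  define B where "B = ball (\<phi> q) r"
  have BS: "\<And>z. z \<in> B \<Longrightarrow> z \<in> S" using r(2) B_def by blast
  have "\<exists>a. \<forall>z\<in>B. Fg z = nil_mult a (G z)"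
  proof (rule LC[of B Fg _ G])
    show "convex B" "open B" by (simp_all add: B_def)
    show "\<And>z. z \<in> B \<Longrightarrow> (Fg has_derivative (frechet_derivative f\<psi> (at (h z)) \<circ> (\<lambda>v. deriv h z * v))) (at z)"
      using dFg BS by blast
    show "\<And>z. z \<in> B \<Longrightarrow> (G has_derivative (\<lambda>v. Mlin 0 (nil_rot \<theta> (frechet_derivative f\<phi> (at z) v)))) (at z)"
      unfolding G_def using rot(4) BS by blast
    show "\<And>z k. z \<in> B \<Longrightarrow> nil_phi Fg z k = nil_phi G z k" using phieq BS by blast
  qed
  then obtain a where a: "\<forall>z\<in>B. Fg z = nil_mult a (G z)" by blast
  define N where "N = {p' \<in> U. \<phi> p' \<in> B}"
  have oN: "openin X N" unfolding N_def B_def by (rule chart_preimage[OF RS UA(1) open_ball])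
  have qN: "q \<in> N" using UA(2) r(1) by (simp add: N_def B_def)
  have cN: "nil_mult (f (\<gamma> p')) (- nil_iso 0 \<theta> (f p')) = a" if p': "p' \<in> N" for p'
  proof -
    have pU: "p' \<in> U" "\<phi> p' \<in> B" using p' by (auto simp: N_def)
    have ip: "inv_into U \<phi> (\<phi> p') = p'" using chart_inv(1)[OF RS UA(1) pU(1)] .
    have "Fg (\<phi> p') = nil_mult a (G (\<phi> p'))" using a pU(2) by blast
    then have "f (\<gamma> p') = nil_mult a (nil_iso 0 \<theta> (f p'))"
      unfolding Fg_def G_def f\<phi>_def local_rep_def using ip by simp
    then show ?thesis by (rule nil_mult_solve)
  qed
  show ?thesis
  proof (intro exI conjI ballI)
    show "openin X N" "q \<in> N" by (rule oN, rule qN)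
    fix p' assume "p' \<in> N"
    then show "nil_mult (f (\<gamma> p')) (- nil_iso 0 \<theta> (f p')) = nil_mult (f (\<gamma> q)) (- nil_iso 0 \<theta> (f q))"
      using cN qN by simp
  qed
qed



lemma nil_mult_0: "nil_mult 0 y = y"
  by (simp add: nil_mult_def vec_eq_iff forall_3)

theorem theorem1p1:
  fixes X :: "'a topology" and A :: "('a set \<times> ('a \<Rightarrow> complex)) set"
    and f :: "'a \<Rightarrow> real^3" and g :: "'a \<Rightarrow> complex" and \<gamma> :: "'a \<Rightarrow> 'a"
  assumes "riemann_surface X A"
    and "conformal_minimal_immersion X A f"
    and "nowhere_vertical_upward X A f"
    and "normal_gauss_map X A f g"
    and "riemann_aut X A \<gamma>"
  shows "(\<forall>p \<theta>. (\<forall>q\<in>topspace X. f (\<gamma> q) = nil_iso p \<theta> (f q)) \<longrightarrow>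
                 (\<forall>q\<in>topspace X. g (\<gamma> q) = cis \<theta> * g q))
       \<and> (\<forall>\<theta>. (\<forall>q\<in>topspace X. g (\<gamma> q) = cis \<theta> * g q) \<longrightarrow>
                 (\<exists>p. \<forall>q\<in>topspace X. f (\<gamma> q) = nil_iso p \<theta> (f q)))"
proof (intro conjI allI impI)
  fix p \<theta> assume H: "\<forall>q\<in>topspace X. f (\<gamma> q) = nil_iso p \<theta> (f q)"
  show "\<forall>q\<in>topspace X. g (\<gamma> q) = cis \<theta> * g q"
    using part_a[OF assms H] by blast
next
  fix \<theta> assume H: "\<forall>q\<in>topspace X. g (\<gamma> q) = cis \<theta> * g q"
  define c where "c = (\<lambda>q. nil_mult (f (\<gamma> q)) (- nil_iso 0 \<theta> (f q)))"
  have conn: "connected_space X" and ne: "topspace X \<noteq> {}" using assms(1) unfolding riemann_surface_def by blast+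
  then obtain q0 where q0: "q0 \<in> topspace X" by blast
  have loc: "\<And>q. q \<in> topspace X \<Longrightarrow> \<exists>N. openin X N \<and> q \<in> N \<and> (\<forall>p\<in>N. c p = c q)"
    unfolding c_def using part_b_local[OF assms H] by blast
  show "\<exists>p. \<forall>q\<in>topspace X. f (\<gamma> q) = nil_iso p \<theta> (f q)"
  proof (intro exI ballI)
    fix q assume q: "q \<in> topspace X"
    have "c q = c q0" by (rule locally_const[OF conn loc q0 q])
    have "f (\<gamma> q) = nil_mult (c q) (nil_iso 0 \<theta> (f q))" unfolding c_def by (rule nil_mult_solve2[symmetric])
    also have "\<dots> = nil_iso (c q0) \<theta> (f q)" using \<open>c q = c q0\<close> by (simp add: nil_iso_def nil_mult_0)
    finally show "f (\<gamma> q) = nil_iso (c q0) \<theta> (f q)" .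
  qed
qed


end
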